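(* Let $n\in(-1,1)$ and let $\mathcal{S}$ be a $C^2$-smooth rotationally symmetric, strictly convex sphere (i.e. $\mathcal{S}\in\mathscr{W}$) whose astigmatism satisfies $s/\sin^{n+2}\theta\in L^2_{\sin\theta}(0,\pi)$. Then, with coefficients $\gamma_{m,n}$ such that $$s=\gamma_{0,n}\sin^{2n+2}\theta+\sin^{n+2}\theta\sum_{m=1}^\infty\gamma_{m,n}\mathrm{P}^{-n}_{n+m}(\cos\theta)$$ (equality in $L^2_{\sin\theta}(0,\pi)$ after division by $\sin^{n+2}\theta$), the following hold pointwise: $$r_1=C_1+\frac{\gamma_{0,n}}{2(n+1)}\sin^{2n+2}\theta+\sin^{n+2}\theta\sum_{m=1}^\infty\gamma_{m,n}\left\{\mathrm{P}^{-(n+2)}_{n+m}(\cos\theta)+\cot\theta\,\mathrm{P}^{-(n+1)}_{n+m}(\cos\theta)\right\},$$ $$r=C_2\cos\theta+C_1+\gamma_{0,n}\left[\frac{\sin^{2n+2}\theta}{2(n+1)}-\cos\theta\int_0^\theta\sin^{2n+1}\vartheta\,d\vartheta\right]+\sin^{n+2}\theta\sum_{m=1}^\infty\gamma_{m,n}\mathrm{P}^{-(n+2)}_{n+m}(\cos\theta),$$ where $C_1=r_1(0)$ and $C_2=r(0)-r_1(0)$.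
   Context: $\mathscr{W}$ is the set of embedded $C^2$-smooth topological 2-spheres in $\mathbb{R}^3$ that are rotationally symmetric and strictly convex, parametrised by the inverse Gauss map with $\theta\in[0,\pi]$ the angle between the outward normal and the symmetry axis; with support function $r=\vec X\cdot\hat n$, radii of curvature $r_1=\frac{\cos^2\theta}{\sin\theta}\frac{d}{d\theta}(r/\cos\theta)$, $r_2=r''+r$, and astigmatism $s=r_2-r_1$. $\mathrm{P}^\mu_\nu$ denotes the (Ferrers) associated Legendre function of the first kind. $L^2_{\sin\theta}(0,\pi)$: complex-valued functions square integrable w.r.t. $\sin\theta\,d\theta$. The functions $\{\mathrm{P}^{-n}_{n+m}(\cos\theta)\}_{m\ge0}$ (with $\mathrm{P}^{-n}_n(\cos\theta)\propto\sin^n\theta$) form an orthogonal basis of $L^2_{\sin\theta}(0,\pi)$ for $n\in(-1,1)$. *)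

theory Defs
  imports "HOL-Analysis.Analysis"
begin

definition hyp2F1_reg :: "real \<Rightarrow> real \<Rightarrow> real \<Rightarrow> real \<Rightarrow> real" where
  "hyp2F1_reg a b c z =
     (\<Sum>k. pochhammer a k * pochhammer b k * rGamma (c + real k) / fact k * z ^ k)"

text \<open>Ferrers associated Legendre function of the first kind (DLMF 14.3.1),
  for -1 < x < 1:  P^mu_nu(x) = ((1+x)/(1-x))^(mu/2) F(nu+1, -nu; 1-mu; (1-x)/2).\<close>
definition ferrersP :: "real \<Rightarrow> real \<Rightarrow> real \<Rightarrow> real" where
  "ferrersP mu nu x = ((1 + x) / (1 - x)) powr (mu / 2) * hyp2F1_reg (nu + 1) (- nu) (1 - mu) ((1 - x) / 2)"

text \<open>Radii of curvature and astigmatism in terms of the support function r(theta).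
  radius1 is r_1 = (cos^2/sin) d/dtheta (r/cos) = r + r' cot theta (valid for 0<theta<pi).\<close>
definition radius1 :: "(real \<Rightarrow> real) \<Rightarrow> real \<Rightarrow> real" where
  "radius1 r \<theta> = r \<theta> + deriv r \<theta> * cos \<theta> / sin \<theta>"

definition radius2 :: "(real \<Rightarrow> real) \<Rightarrow> real \<Rightarrow> real" where
  "radius2 r \<theta> = deriv (deriv r) \<theta> + r \<theta>"

definition astig :: "(real \<Rightarrow> real) \<Rightarrow> real \<Rightarrow> real" where
  "astig r \<theta> = radius2 r \<theta> - radius1 r \<theta>"

text \<open>Class W, represented through the support function: r(theta) is the support
  function of the surface along a meridian great circle of the Gauss sphere,
  theta being the angle between the outward normal and the symmetry axis; as a
  function on the whole real line it is even and 2pi-periodic. C^2-smoothness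
  and strict convexity (positive principal radii) of the surface.\<close>
definition in_W :: "(real \<Rightarrow> real) \<Rightarrow> bool" where
  "in_W r \<longleftrightarrow>
     (\<forall>\<theta>. (r has_real_derivative deriv r \<theta>) (at \<theta>)) \<and>
     (\<forall>\<theta>. (deriv r has_real_derivative deriv (deriv r) \<theta>) (at \<theta>)) \<and>
     continuous_on UNIV (deriv (deriv r)) \<and>
     (\<forall>\<theta>. r (- \<theta>) = r \<theta>) \<and>
     (\<forall>\<theta>. r (\<theta> + 2 * pi) = r \<theta>) \<and>
     (\<forall>\<theta>. radius2 r \<theta> > 0) \<and>
     (\<forall>\<theta>\<in>{0<..<pi}. radius1 r \<theta> > 0)"

end

theory Submission
  imports Defs
begin

definition hc :: "real \<Rightarrow> real \<Rightarrow> real \<Rightarrow> nat \<Rightarrow> real" where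
  "hc a b c k = pochhammer a k * pochhammer b k * rGamma (c + real k) / fact k"

lemma hyp_eq: "hyp2F1_reg a b c z = (\<Sum>k. hc a b c k * z^k)"
  by (simp add: hyp2F1_reg_def hc_def)

lemma hc_Suc:
  assumes "c + real k \<noteq> 0"
  shows "hc a b c (Suc k) = hc a b c k * ((a + k) * (b + k) / ((k+1) * (c+k)))"
proof -
  have r: "rGamma (c + real (Suc k)) = rGamma (c + real k) / (c + k)"
    using rGamma_plus1[of "c + real k"] assms by (simp add: field_simps add_ac)
  show ?thesis unfolding hc_def r
    by (simp add: pochhammer_Suc field_simps)
qed

lemma hc_bound:
  fixes KK :: nat
  assumes c: "c > 0" and p: "p > 0" and cond: "\<And>k::nat. k \<ge> KK \<Longrightarrow> \<bar>(a+real k)*(b+real k)\<bar> \<le> (p+real k)*(c+real k)"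
  shows "\<exists>C. \<forall>k. \<bar>hc a b c k\<bar> \<le> C * (pochhammer p k / fact k)"
proof -
  define d where "d k = pochhammer p k / fact k" for k
  have dpos: "d k > 0" for k using p unfolding d_def by (simp add: pochhammer_pos)
  have dSuc: "d (Suc k) = d k * ((p + k) / (k + 1))" for k
    unfolding d_def by (simp add: pochhammer_Suc field_simps)
  define C where "C = (\<Sum>k\<le>KK. \<bar>hc a b c k\<bar> / d k)"
  have small: "\<bar>hc a b c k\<bar> \<le> C * d k" if "k \<le> KK" for k
  proof -
    have "\<bar>hc a b c k\<bar> / d k \<le> C" unfolding C_def
      by (rule member_le_sum) (use that in \<open>auto intro!: divide_nonneg_pos dpos\<close>)
    thus ?thesis using dpos[of k] by (simp add: field_simps)
  qed
  have big: "\<bar>hc a b c (KK + j)\<bar> \<le> C * d (KK + j)" for j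
  proof (induction j)
    case 0 then show ?case using small by simp
  next
    case (Suc j)
    let ?k = "KK + j"
    have ck: "c + real ?k > 0" using c by simp
    have "\<bar>hc a b c (Suc ?k)\<bar> = \<bar>hc a b c ?k\<bar> * (\<bar>(a + ?k) * (b + ?k)\<bar> / ((?k+1) * (c+?k)))"
      using hc_Suc[of c ?k a b] ck by (simp add: abs_mult abs_divide)
    also have "\<dots> \<le> (C * d ?k) * ((p + ?k) / (?k + 1))"
    proof (rule mult_mono)
      have "\<bar>(a + ?k) * (b + ?k)\<bar> / ((?k+1) * (c+?k)) \<le> ((p + ?k) * (c + ?k)) / ((?k+1) * (c+?k))"
        by (rule divide_right_mono) (use cond[of ?k] ck in auto)
      also have "\<dots> = (p + ?k) / (?k + 1)" using ck by simp
      finally show "\<bar>(a + ?k) * (b + ?k)\<bar> / ((?k+1) * (c+?k)) \<le> (p + ?k) / (?k + 1)" .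
    qed (use Suc.IH ck p in auto)
    also have "\<dots> = C * d (Suc ?k)" by (simp add: dSuc)
    finally show ?case by simp
  qed
  have "\<bar>hc a b c k\<bar> \<le> C * d k" for k
  proof (cases "k \<le> KK")
    case True then show ?thesis by (rule small)
  next
    case False then obtain j where "k = KK + j" by (metis le_add_diff_inverse nat_le_linear)
    then show ?thesis using big by simp
  qed
  thus ?thesis unfolding d_def by blast
qed

lemma binom_sums:
  fixes z p :: real
  assumes "\<bar>z\<bar> < 1"
  shows "(\<lambda>k. pochhammer p k / fact k * z^k) sums (1 - z) powr (-p)"
proof -
  have "(\<lambda>k. ((-p) gchoose k) * (-z)^k) sums (1 + -z) powr (-p)"
    by (rule gen_binomial_real) (use assms in simp)
  moreover have "((-p) gchoose k) * (-z)^k = pochhammer p k / fact k * z^k" for k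
  proof -
    have "(-1::real)^k * (-z)^k = z^k" by (simp flip: power_mult_distrib)
    then show ?thesis by (simp add: gbinomial_pochhammer)
  qed
  ultimately show ?thesis by simp
qed

lemma cond_nu:
  fixes \<nu> p c :: real
  assumes "\<nu> \<ge> 0" "p \<ge> 0" "c > 0" "p + c \<ge> 1" "real k \<ge> \<nu>"
  shows "\<bar>(\<nu> + 1 + real k) * (- \<nu> + real k)\<bar> \<le> (p + real k) * (c + real k)"
proof -
  have nn: "0 \<le> (\<nu> + 1 + real k) * (- \<nu> + real k)" using assms by simp
  have e1: "(\<nu> + 1 + real k) * (- \<nu> + real k) = real k * real k + real k - \<nu> * \<nu> - \<nu>"
    by (simp add: algebra_simps)
  have e2: "(p + real k) * (c + real k) = p * c + (p + c) * real k + real k * real k"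
    by (simp add: algebra_simps)
  have "p * c \<ge> 0" using assms by simp
  moreover have "(p + c) * real k \<ge> 1 * real k" using assms by (intro mult_right_mono) auto
  moreover have "\<nu> * \<nu> \<ge> 0" by simp
  ultimately show ?thesis using abs_of_nonneg[OF nn] e1 e2 assms(1) by linarith
qed

lemma hc_nu_bound:
  fixes \<nu> p c :: real
  assumes "\<nu> \<ge> 0" "p > 0" "c > 0" "p + c \<ge> 1"
  shows "\<exists>C. \<forall>k. \<bar>hc (\<nu>+1) (-\<nu>) c k\<bar> \<le> C * (pochhammer p k / fact k)"
proof (rule hc_bound[where KK = "nat \<lceil>\<nu>\<rceil>"])
  fix k :: nat assume "k \<ge> nat \<lceil>\<nu>\<rceil>"
  then have "real k \<ge> \<nu>" by linarith
  then show "\<bar>(\<nu> + 1 + real k) * (- \<nu> + real k)\<bar> \<le> (p + real k) * (c + real k)"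
    using cond_nu assms by simp
qed (use assms in auto)

lemma hyp_abs_summable:
  fixes \<nu> c z :: real
  assumes "\<nu> \<ge> 0" "c > 0" "\<bar>z\<bar> < 1"
  shows "summable (\<lambda>k. \<bar>hc (\<nu>+1) (-\<nu>) c k * z^k\<bar>)"
proof -
  obtain C where C: "\<And>k. \<bar>hc (\<nu>+1) (-\<nu>) c k\<bar> \<le> C * (pochhammer 1 k / fact k)"
  proof -
    have "\<exists>C. \<forall>k. \<bar>hc (\<nu>+1) (-\<nu>) c k\<bar> \<le> C * (pochhammer 1 k / fact k)"
      by (rule hc_nu_bound) (use assms in auto)
    then show ?thesis using that by blast
  qed
  have "summable (\<lambda>k. C * \<bar>z\<bar>^k)"
    by (rule summable_mult, rule summable_geometric) (use assms in simp)
  then show ?thesis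
  proof (rule summable_comparison_test')
    fix k :: nat
    show "norm \<bar>hc (\<nu>+1) (-\<nu>) c k * z^k\<bar> \<le> C * \<bar>z\<bar>^k"
    proof -
      have "\<bar>hc (\<nu>+1) (-\<nu>) c k\<bar> \<le> C" using C[of k] by (simp flip: pochhammer_fact)
      then have "\<bar>hc (\<nu>+1) (-\<nu>) c k\<bar> * \<bar>z\<bar>^k \<le> C * \<bar>z\<bar>^k" by (rule mult_right_mono) simp
      then show ?thesis by (simp add: abs_mult power_abs)
    qed
  qed
qed

lemma hyp_summable:
  fixes \<nu> c z :: real
  assumes "\<nu> \<ge> 0" "c > 0" "\<bar>z\<bar> < 1"
  shows "summable (\<lambda>k. hc (\<nu>+1) (-\<nu>) c k * z^k)"
  by (rule summable_rabs_cancel[OF hyp_abs_summable[OF assms]])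

lemma hyp_bound:
  fixes \<nu> p c :: real
  assumes "\<nu> \<ge> 0" "p > 0" "c > 0" "p + c \<ge> 1"
  shows "\<exists>C. \<forall>z. 0 \<le> z \<and> z < 1 \<longrightarrow> \<bar>hyp2F1_reg (\<nu>+1) (-\<nu>) c z\<bar> \<le> C * (1 - z) powr (-p)"
proof -
  obtain C where C: "\<And>k. \<bar>hc (\<nu>+1) (-\<nu>) c k\<bar> \<le> C * (pochhammer p k / fact k)"
    using hc_nu_bound[OF assms] by auto
  have "\<bar>hyp2F1_reg (\<nu>+1) (-\<nu>) c z\<bar> \<le> C * (1 - z) powr (-p)" if z: "0 \<le> z" "z < 1" for z
  proof -
    have sa: "summable (\<lambda>k. \<bar>hc (\<nu>+1) (-\<nu>) c k * z^k\<bar>)"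
      using hyp_abs_summable[of \<nu> c z] assms z by simp
    have bs: "(\<lambda>k. C * (pochhammer p k / fact k * z^k)) sums (C * (1 - z) powr (-p))"
      using binom_sums[of z p] z by (intro sums_mult) simp
    have "\<bar>hyp2F1_reg (\<nu>+1) (-\<nu>) c z\<bar> \<le> (\<Sum>k. \<bar>hc (\<nu>+1) (-\<nu>) c k * z^k\<bar>)"
      unfolding hyp_eq using summable_norm[of "\<lambda>k. hc (\<nu>+1) (-\<nu>) c k * z^k"] sa by simp
    also have "\<dots> \<le> (\<Sum>k. C * (pochhammer p k / fact k * z^k))"
    proof (rule suminf_le)
      fix k
      show "\<bar>hc (\<nu>+1) (-\<nu>) c k * z^k\<bar> \<le> C * (pochhammer p k / fact k * z^k)"
      proof -
        have "\<bar>hc (\<nu>+1) (-\<nu>) c k\<bar> * z^k \<le> (C * (pochhammer p k / fact k)) * z^k"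
          by (rule mult_right_mono[OF C[of k]]) (use z in simp)
        moreover have "\<bar>hc (\<nu>+1) (-\<nu>) c k * z^k\<bar> = \<bar>hc (\<nu>+1) (-\<nu>) c k\<bar> * z^k"
          using z by (simp add: abs_mult)
        ultimately show ?thesis by (simp only: mult.assoc)
      qed
    qed (use sa bs sums_summable in auto)
    also have "\<dots> = C * (1 - z) powr (-p)" using bs sums_unique by metis
    finally show ?thesis .
  qed
  then show ?thesis by blast
qed

lemma hyp_fun_eq: "hyp2F1_reg a b c = (\<lambda>z. \<Sum>k. hc a b c k * z^k)"
  by (simp add: hyp_eq fun_eq_iff)

lemma hyp_deriv:
  fixes \<nu> c z :: real
  assumes "\<nu> \<ge> 0" "c > 0" "\<bar>z\<bar> < 1"
  shows "(hyp2F1_reg (\<nu>+1) (-\<nu>) c has_real_derivative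
           (\<Sum>k. diffs (hc (\<nu>+1) (-\<nu>) c) k * z^k)) (at z)"
  unfolding hyp_fun_eq
  by (rule termdiffs_strong'[where K=1]) (use assms hyp_summable in auto)

lemma hyp_isCont:
  fixes \<nu> c z :: real
  assumes "\<nu> \<ge> 0" "c > 0" "\<bar>z\<bar> < 1"
  shows "isCont (hyp2F1_reg (\<nu>+1) (-\<nu>) c) z"
  using hyp_deriv[OF assms] DERIV_isCont by blast

lemma hyp_shift:
  fixes \<nu> c z :: real
  assumes nu: "\<nu> \<ge> 0" and c: "c > 0" and z: "0 < z" "z < 1"
  shows "((\<lambda>z. z powr (c-1) * hyp2F1_reg (\<nu>+1) (-\<nu>) c z) has_real_derivative
           z powr (c-2) * hyp2F1_reg (\<nu>+1) (-\<nu>) (c-1) z) (at z)"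
proof -
  define A where "A = hc (\<nu>+1) (-\<nu>) c"
  define F' where "F' = (\<Sum>k. diffs A k * z^k)"
  have zz: "\<bar>z\<bar> < 1" using z by simp
  have dF: "(hyp2F1_reg (\<nu>+1) (-\<nu>) c has_real_derivative F') (at z)"
    unfolding F'_def A_def by (rule hyp_deriv[OF nu c zz])
  have s1: "(\<lambda>k. A k * z^k) sums hyp2F1_reg (\<nu>+1) (-\<nu>) c z"
    unfolding A_def hyp_eq using hyp_summable[OF nu c zz] by (simp add: summable_sums)
  have "summable (\<lambda>k. diffs A k * z^k)"
    by (rule termdiff_converges[where K=1]) (use zz hyp_summable[OF nu c] in \<open>auto simp: A_def\<close>)
  then have s2: "(\<lambda>k. diffs A k * z^k) sums F'" unfolding F'_def by (simp add: summable_sums)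
  define g where "g k = real k * A k * z^k" for k
  have "(\<lambda>k. z * (diffs A k * z^k)) sums (z * F')" using s2 by (rule sums_mult)
  moreover have "z * (diffs A k * z^k) = g (Suc k)" for k
    by (simp add: g_def diffs_def algebra_simps)
  ultimately have "(\<lambda>k. g (Suc k)) sums (z * F')" by simp
  then have "g sums (z * F' + g 0)" by (simp only: sums_Suc_iff)
  then have s3: "g sums (z * F')" by (simp add: g_def)
  have s4: "(\<lambda>k. (c-1) * (A k * z^k) + g k) sums ((c-1) * hyp2F1_reg (\<nu>+1) (-\<nu>) c z + z * F')"
    by (intro sums_add sums_mult s1 s3)
  have eq: "(c-1) * (A k * z^k) + g k = hc (\<nu>+1) (-\<nu>) (c-1) k * z^k" for k
  proof -
    have "(c - 1 + real k) * rGamma (c - 1 + real k + 1) = rGamma (c - 1 + real k)"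
      by (rule rGamma_plus1)
    moreover have "c - 1 + real k + 1 = c + real k" by simp
    ultimately have hR: "rGamma (c - 1 + real k) = (c - 1 + real k) * rGamma (c + real k)"
      by metis
    have hc1: "hc (\<nu>+1) (-\<nu>) (c-1) k = (c - 1 + real k) * A k"
      unfolding A_def hc_def hR by (simp add: algebra_simps)
    show ?thesis unfolding hc1 g_def by (simp add: algebra_simps)
  qed
  have hc1: "hyp2F1_reg (\<nu>+1) (-\<nu>) (c-1) z = (c-1) * hyp2F1_reg (\<nu>+1) (-\<nu>) c z + z * F'"
    using s4 unfolding eq hyp_eq[of _ _ "c-1"] by (rule sums_unique[symmetric])
  have d1: "((\<lambda>z. z powr (c-1)) has_real_derivative (c-1) * z powr (c-1-1)) (at z)"
    by (rule has_real_derivative_powr) (use z in simp)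
  have "((\<lambda>z. z powr (c-1) * hyp2F1_reg (\<nu>+1) (-\<nu>) c z) has_real_derivative
          ((c-1) * z powr (c-1-1)) * hyp2F1_reg (\<nu>+1) (-\<nu>) c z + F' * z powr (c-1)) (at z)"
    by (rule DERIV_mult[OF d1 dF])
  moreover have "((c-1) * z powr (c-1-1)) * hyp2F1_reg (\<nu>+1) (-\<nu>) c z + F' * z powr (c-1)
      = z powr (c-2) * hyp2F1_reg (\<nu>+1) (-\<nu>) (c-1) z"
  proof -
    have "z powr (c-1) = z powr ((c-2) + 1)" by simp
    also have "\<dots> = z powr (c-2) * z powr 1" by (rule powr_add)
    also have "\<dots> = z powr (c-2) * z" using z by simp
    finally have "z powr (c-1) = z powr (c-2) * z" .
    moreover have "c - 1 - 1 = c - 2" by simp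
    ultimately show ?thesis unfolding hc1 by (simp add: algebra_simps)
  qed
  ultimately show ?thesis by simp
qed

lemma half_pos:
  fixes t :: real
  assumes "0 \<le> t" "t < pi"
  shows "cos (t/2) > 0" "sin (t/2) \<ge> 0"
proof -
  show "cos (t/2) > 0" by (rule cos_gt_zero_pi) (use assms in auto)
  show "sin (t/2) \<ge> 0" by (rule sin_ge_zero) (use assms in auto)
qed

lemma half_pos':
  fixes t :: real
  assumes "0 < t" "t < pi"
  shows "sin (t/2) > 0"
  by (rule sin_gt_zero) (use assms in auto)

lemma sin_half: "sin (t::real) = 2 * sin (t/2) * cos (t/2)"
  using sin_double[of "t/2"] by simp

lemma cos_half: "cos (t::real) = 1 - 2 * sin (t/2)^2"
  using cos_double_sin[of "t/2"] by simp

lemma cos_half': "cos (t::real) = 2 * cos (t/2)^2 - 1"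
  using cos_double_cos[of "t/2"] by simp

lemma ferrers_half:
  fixes t k \<nu> :: real
  assumes t: "0 < t" "t < pi"
  shows "ferrersP (-k) \<nu> (cos t) =
           (sin (t/2) / cos (t/2)) powr k * hyp2F1_reg (\<nu>+1) (-\<nu>) (1+k) (sin (t/2)^2)"
proof -
  define s where "s = sin (t/2)"
  define c where "c = cos (t/2)"
  have s: "s > 0" unfolding s_def using half_pos'[OF t] .
  have c: "c > 0" unfolding c_def using half_pos[of t] t by auto
  have q: "(1 + cos t) / (1 - cos t) = (c/s)^2"
  proof -
    have a: "1 + cos t = 2 * c^2" using cos_half'[of t] unfolding c_def by simp
    have b: "1 - cos t = 2 * s^2" using cos_half[of t] unfolding s_def by simp
    show ?thesis unfolding a b by (simp add: power_divide)
  qed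
  have sq: "(c/s)^2 = (c/s) powr 2" using powr_realpow[of "c/s" 2] s c by simp
  have "((c/s)^2) powr (-k/2) = (c/s) powr (2 * (-k/2))"
    unfolding sq by (rule powr_powr)
  also have "\<dots> = (c/s) powr (-k)" by simp
  also have "\<dots> = 1 / (c/s) powr k" by (rule powr_minus_divide)
  also have "\<dots> = (s/c) powr k" using s c by (simp add: powr_divide)
  finally have p: "((1 + cos t) / (1 - cos t)) powr (-k/2) = (s/c) powr k" unfolding q .
  have z: "(1 - cos t) / 2 = s^2" using cos_half[of t] unfolding s_def by simp
  show ?thesis unfolding ferrersP_def diff_minus_eq_add p z s_def c_def ..
qed

definition HH :: "real \<Rightarrow> real \<Rightarrow> real \<Rightarrow> real" where
  "HH \<nu> c t = (sin (t/2)^2) powr (c-1) * hyp2F1_reg (\<nu>+1) (-\<nu>) c (sin (t/2)^2)"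

lemma ferrers_HH:
  fixes t k \<nu> :: real
  assumes t: "0 < t" "t < pi"
  shows "sin t powr k * ferrersP (-k) \<nu> (cos t) = 2 powr k * HH \<nu> (1+k) t"
proof -
  define s where "s = sin (t/2)"
  define c where "c = cos (t/2)"
  have s: "s > 0" unfolding s_def using half_pos'[OF t] .
  have c: "c > 0" unfolding c_def using half_pos[of t] t by auto
  have e1: "sin t powr k = 2 powr k * s powr k * c powr k"
    using sin_half[of t] s c unfolding s_def c_def by (simp add: powr_mult)
  have e2: "(s / c) powr k = s powr k / c powr k" using s c by (simp add: powr_divide)
  have e3: "(s^2) powr k = s powr k * s powr k"
  proof -
    have "(s^2) powr k = (s * s) powr k" by (simp add: power2_eq_square)
    also have "\<dots> = s powr k * s powr k" by (rule powr_mult)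
    finally show ?thesis .
  qed
  have cne: "c powr k \<noteq> 0" using c by simp
  have e: "sin t powr k * (s / c) powr k = 2 powr k * (s^2) powr k"
    unfolding e1 e2 e3 using cne by simp
  show ?thesis unfolding ferrers_half[OF t] HH_def
    using e unfolding s_def c_def by (simp add: mult.assoc[symmetric])
qed

lemma HH_deriv:
  fixes \<nu> c t :: real
  assumes nu: "\<nu> \<ge> 0" and c: "c > 1" and t: "0 < t" "t < pi"
  shows "(HH \<nu> c has_real_derivative (sin t / 2 * HH \<nu> (c-1) t)) (at t)"
proof -
  let ?z = "sin (t/2)^2"
  have s: "sin (t/2) > 0" using half_pos'[OF t] .
  have cc: "cos (t/2) > 0" using half_pos[of t] t by auto
  have z0: "0 < ?z" using s by simp
  have z1: "?z < 1"
  proof -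
    have "cos (t/2)^2 > 0" using cc by simp
    then show ?thesis using sin_cos_squared_add[of "t/2"] by linarith
  qed
  have dG: "((\<lambda>z. z powr (c-1) * hyp2F1_reg (\<nu>+1) (-\<nu>) c z) has_real_derivative
           ?z powr (c-2) * hyp2F1_reg (\<nu>+1) (-\<nu>) (c-1) ?z) (at ?z)"
    by (rule hyp_shift) (use nu c z0 z1 in auto)
  have dz: "((\<lambda>t. sin (t/2)^2) has_real_derivative sin t / 2) (at t)"
  proof -
    have "((\<lambda>t. sin (t/2)^2) has_real_derivative (sin (t/2) * cos (t/2))) (at t)"
      by (auto intro!: derivative_eq_intros)
    moreover have "sin t / 2 = sin (t/2) * cos (t/2)" using sin_half[of t] by simp
    ultimately show ?thesis by simp
  qed
  have d: "((\<lambda>t. (sin (t/2)^2) powr (c-1) * hyp2F1_reg (\<nu>+1) (-\<nu>) c (sin (t/2)^2)) has_real_derivative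
          (?z powr (c-2) * hyp2F1_reg (\<nu>+1) (-\<nu>) (c-1) ?z) * (sin t / 2)) (at t)"
    by (rule DERIV_chain2[where g = "\<lambda>t. sin (t/2)^2", OF dG dz])
  have hh: "HH \<nu> c = (\<lambda>t. (sin (t/2)^2) powr (c-1) * hyp2F1_reg (\<nu>+1) (-\<nu>) c (sin (t/2)^2))"
    by (simp add: HH_def fun_eq_iff)
  have e3: "(?z powr (c-2) * hyp2F1_reg (\<nu>+1) (-\<nu>) (c-1) ?z) * (sin t / 2) = sin t / 2 * HH \<nu> (c-1) t"
    unfolding HH_def by (simp add: mult.commute)
  show ?thesis unfolding hh using d[unfolded e3] .
qed

lemma HH_cont:
  fixes \<nu> c \<theta> :: real
  assumes nu: "\<nu> \<ge> 0" and c: "c > 1" and th: "\<theta> < pi"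
  shows "continuous_on {0..\<theta>} (HH \<nu> c)"
proof -
  have "isCont (HH \<nu> c) t" if t: "t \<in> {0..\<theta>}" for t
  proof -
    have cc: "cos (t/2) > 0" using half_pos[of t] t th by auto
    have z1: "\<bar>sin (t/2)^2\<bar> < 1"
    proof -
      have "cos (t/2)^2 > 0" using cc by simp
      then have "sin (t/2)^2 < 1" using sin_cos_squared_add[of "t/2"] by linarith
      then show ?thesis by simp
    qed
    have c1: "continuous_on UNIV (\<lambda>t. (sin (t/2)^2) powr (c-1))"
      by (rule continuous_on_powr') (use c in \<open>auto intro!: continuous_intros\<close>)
    have i1: "isCont (\<lambda>t. (sin (t/2)^2) powr (c-1)) t"
      using c1 continuous_on_eq_continuous_at by blast
    have i2: "isCont (\<lambda>t. hyp2F1_reg (\<nu>+1) (-\<nu>) c (sin (t/2)^2)) t"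
      by (rule isCont_o2[OF _ hyp_isCont]) (use nu c z1 in \<open>auto intro!: continuous_intros\<close>)
    show ?thesis unfolding HH_def[abs_def] by (intro isCont_mult i1 i2)
  qed
  then show ?thesis by (intro continuous_at_imp_continuous_on) auto
qed

lemma HH_zero: "c > 1 \<Longrightarrow> HH \<nu> c 0 = 0"
  by (simp add: HH_def)

lemma two_powr_Suc: "(2::real) powr (x + 1) = 2 * 2 powr x"
  by (simp add: powr_add)

lemma powr_plus1: "(y::real) > 0 \<Longrightarrow> y powr (x + 1) = y powr x * y"
  by (simp add: powr_add)

lemma phi_deriv:
  fixes n \<nu> t :: real
  assumes n: "n > -1" and nu: "\<nu> \<ge> 0" and t: "0 < t" "t < pi"
  shows "((\<lambda>t. 2 powr (n+1) * HH \<nu> (n+2) t) has_real_derivative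
           ferrersP (-n) \<nu> (cos t) * sin t powr (n+1)) (at t)"
proof -
  have d: "(HH \<nu> (n+2) has_real_derivative (sin t / 2 * HH \<nu> (n+2-1) t)) (at t)"
    by (rule HH_deriv) (use n nu t in auto)
  have e: "n + 2 - 1 = 1 + n" by simp
  have st: "sin t > 0" using sin_gt_zero t by blast
  have fh: "sin t powr n * ferrersP (-n) \<nu> (cos t) = 2 powr n * HH \<nu> (1+n) t"
    by (rule ferrers_HH) (use t in auto)
  have "2 powr (n+1) * (sin t / 2 * HH \<nu> (1+n) t) = sin t * (2 powr n * HH \<nu> (1+n) t)"
    by (simp add: two_powr_Suc)
  also have "\<dots> = ferrersP (-n) \<nu> (cos t) * sin t powr (n+1)"
    unfolding fh[symmetric] powr_plus1[OF st] by simp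
  finally have v: "2 powr (n+1) * (sin t / 2 * HH \<nu> (1+n) t) = ferrersP (-n) \<nu> (cos t) * sin t powr (n+1)" .
  show ?thesis using DERIV_cmult[OF d[unfolded e], of "2 powr (n+1)"] unfolding v .
qed

lemma ftc_I1:
  fixes n \<nu> \<theta> :: real
  assumes n: "n > -1" and nu: "\<nu> \<ge> 0" and th: "0 < \<theta>" "\<theta> < pi"
  shows "((\<lambda>t. ferrersP (-n) \<nu> (cos t) * sin t powr (n+1)) has_integral
           (sin \<theta> powr (n+1) * ferrersP (-(n+1)) \<nu> (cos \<theta>))) {0..\<theta>}"
proof -
  define \<Phi> where "\<Phi> t = 2 powr (n+1) * HH \<nu> (n+2) t" for t
  have cont: "continuous_on {0..\<theta>} \<Phi>"
    unfolding \<Phi>_def by (intro continuous_on_mult_left HH_cont) (use n nu th in auto)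
  have der: "(\<Phi> has_vector_derivative (ferrersP (-n) \<nu> (cos t) * sin t powr (n+1))) (at t)"
    if "t \<in> {0<..<\<theta>}" for t
    unfolding \<Phi>_def[abs_def] has_real_derivative_iff_has_vector_derivative[symmetric]
    by (rule phi_deriv) (use n nu th that in auto)
  have "((\<lambda>t. ferrersP (-n) \<nu> (cos t) * sin t powr (n+1)) has_integral (\<Phi> \<theta> - \<Phi> 0)) {0..\<theta>}"
    by (rule fundamental_theorem_of_calculus_interior) (use th cont der in auto)
  moreover have "\<Phi> 0 = 0" unfolding \<Phi>_def using n by (simp add: HH_zero)
  moreover have "\<Phi> \<theta> = sin \<theta> powr (n+1) * ferrersP (-(n+1)) \<nu> (cos \<theta>)"
  proof -
    have "sin \<theta> powr (n+1) * ferrersP (-(n+1)) \<nu> (cos \<theta>) = 2 powr (n+1) * HH \<nu> (1+(n+1)) \<theta>"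
      by (rule ferrers_HH) (use th in auto)
    moreover have "1 + (n+1) = n + 2" by simp
    ultimately show ?thesis unfolding \<Phi>_def by simp
  qed
  ultimately show ?thesis by simp
qed

lemma ftc_I2:
  fixes n \<nu> \<theta> :: real
  assumes n: "n > -1" and nu: "\<nu> \<ge> 0" and th: "0 < \<theta>" "\<theta> < pi"
  shows "((\<lambda>t. ferrersP (-n) \<nu> (cos t) * (sin t powr (n+1) * cos t)) has_integral
           (sin \<theta> powr (n+2) * ferrersP (-(n+2)) \<nu> (cos \<theta>)
            + cos \<theta> * (sin \<theta> powr (n+1) * ferrersP (-(n+1)) \<nu> (cos \<theta>)))) {0..\<theta>}"
proof -
  define \<Phi> where "\<Phi> t = 2 powr (n+1) * HH \<nu> (n+2) t" for t
  define \<Psi> where "\<Psi> t = 2 powr (n+2) * HH \<nu> (n+3) t + cos t * \<Phi> t" for t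
  have cont: "continuous_on {0..\<theta>} \<Psi>"
  proof -
    have cP: "continuous_on {0..\<theta>} \<Phi>"
      unfolding \<Phi>_def by (intro continuous_on_mult_left HH_cont) (use n nu th in auto)
    have c2: "continuous_on {0..\<theta>} (\<lambda>t. 2 powr (n+2) * HH \<nu> (n+3) t)"
      by (intro continuous_on_mult_left HH_cont) (use n nu th in auto)
    have c1: "continuous_on {0..\<theta>} (\<lambda>t. cos t * \<Phi> t)"
      by (rule continuous_on_mult[OF continuous_on_cos[OF continuous_on_id] cP])
    show ?thesis unfolding \<Psi>_def[abs_def] by (rule continuous_on_add[OF c2 c1])
  qed
  have der: "(\<Psi> has_vector_derivative (ferrersP (-n) \<nu> (cos t) * (sin t powr (n+1) * cos t))) (at t)"
    if t: "t \<in> {0<..<\<theta>}" for t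
  proof -
    have t': "0 < t" "t < pi" using t th by auto
    have d3: "(HH \<nu> (n+3) has_real_derivative (sin t / 2 * HH \<nu> (n+3-1) t)) (at t)"
      by (rule HH_deriv) (use n nu t' in auto)
    have e: "n + 3 - 1 = n + 2" by simp
    have dphi: "(\<Phi> has_real_derivative ferrersP (-n) \<nu> (cos t) * sin t powr (n+1)) (at t)"
      unfolding \<Phi>_def[abs_def] by (rule phi_deriv) (use n nu t' in auto)
    have dv: "(\<Psi> has_real_derivative
            2 powr (n+2) * (sin t / 2 * HH \<nu> (n+2) t)
            + (- sin t * \<Phi> t + ferrersP (-n) \<nu> (cos t) * sin t powr (n+1) * cos t)) (at t)"
      unfolding \<Psi>_def[abs_def]
      by (intro DERIV_add DERIV_cmult[OF d3[unfolded e]] DERIV_mult'[OF DERIV_cos dphi, THEN DERIV_cong])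
         (simp add: algebra_simps)
    have eqA: "2 powr (n+2) * (sin t / 2 * HH \<nu> (n+2) t) = sin t * \<Phi> t"
    proof -
      have "(2::real) powr (n+2) = 2 * 2 powr (n+1)" using two_powr_Suc[of "n+1"] by (simp add: add.assoc)
      then show ?thesis unfolding \<Phi>_def by simp
    qed
    have xe: "2 powr (n+2) * (sin t / 2 * HH \<nu> (n+2) t)
            + (- sin t * \<Phi> t + ferrersP (-n) \<nu> (cos t) * sin t powr (n+1) * cos t)
            = ferrersP (-n) \<nu> (cos t) * (sin t powr (n+1) * cos t)"
      unfolding eqA by simp
    have "(\<Psi> has_real_derivative ferrersP (-n) \<nu> (cos t) * (sin t powr (n+1) * cos t)) (at t)"
      using dv unfolding xe .
    then show ?thesis by (simp add: has_real_derivative_iff_has_vector_derivative)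
  qed
  have "((\<lambda>t. ferrersP (-n) \<nu> (cos t) * (sin t powr (n+1) * cos t)) has_integral (\<Psi> \<theta> - \<Psi> 0)) {0..\<theta>}"
    by (rule fundamental_theorem_of_calculus_interior) (use th cont der in auto)
  moreover have "\<Psi> 0 = 0" unfolding \<Psi>_def \<Phi>_def using n by (simp add: HH_zero)
  moreover have "\<Psi> \<theta> = sin \<theta> powr (n+2) * ferrersP (-(n+2)) \<nu> (cos \<theta>)
            + cos \<theta> * (sin \<theta> powr (n+1) * ferrersP (-(n+1)) \<nu> (cos \<theta>))"
  proof -
    have a: "sin \<theta> powr (n+1) * ferrersP (-(n+1)) \<nu> (cos \<theta>) = 2 powr (n+1) * HH \<nu> (1+(n+1)) \<theta>"
      by (rule ferrers_HH) (use th in auto)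
    have b: "sin \<theta> powr (n+2) * ferrersP (-(n+2)) \<nu> (cos \<theta>) = 2 powr (n+2) * HH \<nu> (1+(n+2)) \<theta>"
      by (rule ferrers_HH) (use th in auto)
    have c: "1 + (n+1) = n + 2" "1 + (n+2) = n + 3" by simp_all
    show ?thesis unfolding \<Psi>_def \<Phi>_def a b c ..
  qed
  ultimately show ?thesis by simp
qed

lemma sc_bound:
  fixes s c q1 q2 :: real
  assumes s: "0 < s" "s \<le> 1" and c: "0 < c" "c \<le> 1" and sc: "s^2 + c^2 = 1"
    and q: "q1 \<ge> -1" "q2 \<ge> -1"
  shows "s powr q1 * c powr q2 \<le> 2 * (s powr q1 * c + c powr q2 * s)"
proof (cases "s \<le> c")
  case True
  have "s^2 \<le> c^2" using True s by (intro power_mono) auto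
  then have c2: "1 \<le> (2 * c) * c" using sc by (simp add: power2_eq_square)
  have "c powr q2 \<le> c powr (-1)" by (rule powr_mono') (use q c in auto)
  also have "\<dots> = 1 / c" using c by (simp add: powr_minus_divide)
  also have "\<dots> \<le> 2 * c" using c2 c by (simp add: divide_le_eq)
  finally have "c powr q2 \<le> 2 * c" .
  then have "s powr q1 * c powr q2 \<le> s powr q1 * (2 * c)" by (rule mult_left_mono) simp
  moreover have "0 \<le> c powr q2 * s" using s c by simp
  moreover have "s powr q1 * (2 * c) = 2 * (s powr q1 * c)" by (simp add: mult_ac)
  moreover have "2 * (s powr q1 * c + c powr q2 * s) = 2 * (s powr q1 * c) + 2 * (c powr q2 * s)"
    by (rule distrib_left)
  ultimately show ?thesis by linarith
next
  case False
  have "c^2 \<le> s^2" using False c by (intro power_mono) auto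
  then have s2: "1 \<le> (2 * s) * s" using sc by (simp add: power2_eq_square)
  have "s powr q1 \<le> s powr (-1)" by (rule powr_mono') (use q s in auto)
  also have "\<dots> = 1 / s" using s by (simp add: powr_minus_divide)
  also have "\<dots> \<le> 2 * s" using s2 s by (simp add: divide_le_eq)
  finally have "s powr q1 \<le> 2 * s" .
  then have "s powr q1 * c powr q2 \<le> (2 * s) * c powr q2" by (rule mult_right_mono) simp
  moreover have "0 \<le> s powr q1 * c" using s c by simp
  moreover have "(2 * s) * c powr q2 = 2 * (c powr q2 * s)" by (simp add: mult_ac)
  moreover have "2 * (s powr q1 * c + c powr q2 * s) = 2 * (s powr q1 * c) + 2 * (c powr q2 * s)"
    by (rule distrib_left)
  ultimately show ?thesis by linarith
qed

lemma half_ranges: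
  fixes t :: real
  assumes "0 < t" "t < pi"
  shows "0 < sin (t/2)" "sin (t/2) \<le> 1" "0 < cos (t/2)" "cos (t/2) \<le> 1"
        "sin (t/2)^2 + cos (t/2)^2 = 1"
  using half_pos'[OF assms] half_pos[of t] assms by auto

lemma sc_integrable:
  fixes q1 q2 :: real
  assumes q1: "q1 > -1" and q2: "q2 > -1"
  shows "(\<lambda>t. sin (t/2) powr q1 * cos (t/2) powr q2) integrable_on {0<..<pi}"
proof -
  define g where "g t = sin (t/2) powr q1 * cos (t/2) + cos (t/2) powr q2 * sin (t/2)" for t
  define G where "G t = 2/(q1+1) * sin (t/2) powr (q1+1) - 2/(q2+1) * cos (t/2) powr (q2+1)" for t
  have Gc: "continuous_on {0..pi} G"
  proof -
    have a: "continuous_on {0..pi} (\<lambda>t. sin (t/2) powr (q1+1))"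
    proof (rule continuous_on_powr')
      show "\<forall>x\<in>{0..pi}. 0 \<le> sin (x/2) \<and> (sin (x/2) = 0 \<longrightarrow> 0 < q1 + 1)"
        using q1 by (auto intro!: sin_ge_zero)
    qed (auto intro!: continuous_intros)
    have b: "continuous_on {0..pi} (\<lambda>t. cos (t/2) powr (q2+1))"
    proof (rule continuous_on_powr')
      show "\<forall>x\<in>{0..pi}. 0 \<le> cos (x/2) \<and> (cos (x/2) = 0 \<longrightarrow> 0 < q2 + 1)"
        using q2 by (auto intro!: cos_ge_zero)
    qed (auto intro!: continuous_intros)
    show ?thesis unfolding G_def[abs_def]
      by (intro continuous_on_diff continuous_on_mult_left a b)
  qed
  have Gd: "(G has_vector_derivative g t) (at t)" if t: "t \<in> {0<..<pi}" for t
  proof -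
    have s: "sin (t/2) > 0" and c: "cos (t/2) > 0" using half_ranges[of t] t by auto
    have q: "q1 + 1 \<noteq> 0" "q2 + 1 \<noteq> 0" using q1 q2 by auto
    have dh: "((\<lambda>t. t/2) has_real_derivative 1/2) (at t)"
      by (auto intro!: derivative_eq_intros)
    have d1: "((\<lambda>t. sin (t/2)) has_real_derivative cos (t/2) * (1/2)) (at t)"
      by (rule DERIV_chain2[where f=sin, OF DERIV_sin dh])
    have d1': "((\<lambda>t. cos (t/2)) has_real_derivative - sin (t/2) * (1/2)) (at t)"
      by (rule DERIV_chain2[where f=cos, OF DERIV_cos dh])
    have d2: "((\<lambda>t. sin (t/2) powr (q1+1)) has_real_derivative
               ((q1+1) * sin (t/2) powr (q1+1-1)) * (cos (t/2) * (1/2))) (at t)"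
      by (rule DERIV_chain2[OF has_real_derivative_powr d1]) (use s in simp)
    have d3: "((\<lambda>t. cos (t/2) powr (q2+1)) has_real_derivative
               ((q2+1) * cos (t/2) powr (q2+1-1)) * (- sin (t/2) * (1/2))) (at t)"
      by (rule DERIV_chain2[OF has_real_derivative_powr d1']) (use c in simp)
    have dG: "(G has_real_derivative
            2/(q1+1) * (((q1+1) * sin (t/2) powr (q1+1-1)) * (cos (t/2) * (1/2)))
          - 2/(q2+1) * (((q2+1) * cos (t/2) powr (q2+1-1)) * (- sin (t/2) * (1/2)))) (at t)"
      unfolding G_def[abs_def] by (intro DERIV_diff DERIV_cmult d2 d3)
    have v1: "2/(q1+1) * (((q1+1) * sin (t/2) powr (q1+1-1)) * (cos (t/2) * (1/2)))
              = sin (t/2) powr q1 * cos (t/2)" using q by simp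
    have v2: "2/(q2+1) * (((q2+1) * cos (t/2) powr (q2+1-1)) * (- sin (t/2) * (1/2)))
              = - (cos (t/2) powr q2 * sin (t/2))" using q by simp
    have "(G has_real_derivative g t) (at t)" using dG unfolding v1 v2 g_def by simp
    then show ?thesis by (simp add: has_real_derivative_iff_has_vector_derivative)
  qed
  have "(g has_integral (G pi - G 0)) {0..pi}"
    by (rule fundamental_theorem_of_calculus_interior) (use Gc Gd in auto)
  then have gi: "g integrable_on {0<..<pi}" using integrable_on_Icc_iff_Ioo by blast
  have g2: "(\<lambda>t. 2 * g t) integrable_on {0<..<pi}" using gi by (rule integrable_on_mult_right)
  have cont: "continuous_on {0<..<pi} (\<lambda>t. sin (t/2) powr q1 * cos (t/2) powr q2)"
  proof -
    have "isCont (\<lambda>t. sin (t/2) powr q1 * cos (t/2) powr q2) t" if "t \<in> {0<..<pi}" for t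
      using half_ranges[of t] that by (auto intro!: continuous_intros)
    then show ?thesis by (intro continuous_at_imp_continuous_on) auto
  qed
  have meas: "(\<lambda>t. sin (t/2) powr q1 * cos (t/2) powr q2) \<in> borel_measurable (lebesgue_on {0<..<pi})"
    using continuous_imp_measurable_on_sets_lebesgue[OF cont] by simp
  have bnd: "norm (sin (t/2) powr q1 * cos (t/2) powr q2) \<le> 2 * g t" if "t \<in> {0<..<pi}" for t
  proof -
    note h = half_ranges[of t]
    have "norm (sin (t/2) powr q1 * cos (t/2) powr q2) = sin (t/2) powr q1 * cos (t/2) powr q2"
      by simp
    also have "\<dots> \<le> 2 * g t" unfolding g_def
      by (rule sc_bound) (use h that q1 q2 in auto)
    finally show ?thesis .
  qed
  show ?thesis by (rule measurable_bounded_by_integrable_imp_integrable[OF meas g2 bnd]) auto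
qed

lemma key_alg:
  fixes s c n p :: real
  assumes s: "s > 0" and c: "c > 0"
  shows "((s/c) powr n * c powr (-2 * p))^2 * (2 * s * c) = 2 * (s powr (2 * n+1) * c powr (1-2 * n-4 * p))"
proof -
  obtain u v where u: "s = exp u" and v: "c = exp v" using s c by (metis exp_ln)
  have "((s/c) powr n * c powr (-2 * p))^2 * (2 * s * c) = 2 * exp (2 * (n * (u-v)) + 2 * (-2 * p * v) + u + v)"
    unfolding u v by (simp add: powr_def power2_eq_square exp_add[symmetric] exp_diff[symmetric] mult_ac)
  also have "\<dots> = 2 * exp ((2 * n+1) * u + (1-2 * n-4 * p) * v)" by (simp add: algebra_simps)
  also have "\<dots> = 2 * (s powr (2 * n+1) * c powr (1-2 * n-4 * p))"
    unfolding u v by (simp add: powr_def exp_add[symmetric] mult_ac)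
  finally show ?thesis .
qed

definition L2w :: "(real \<Rightarrow> real) \<Rightarrow> bool" where
  "L2w \<phi> \<longleftrightarrow> \<phi> \<in> borel_measurable (lebesgue_on {0<..<pi}) \<and>
               (\<lambda>t. (\<phi> t)^2 * sin t) integrable_on {0<..<pi}"

lemma lset: "{0<..<pi} \<in> sets lebesgue" by simp

lemma meas_cont: "continuous_on {0<..<pi} f \<Longrightarrow> f \<in> borel_measurable (lebesgue_on {0<..<pi})"
  using continuous_imp_measurable_on_sets_lebesgue[OF _ lset] by blast

lemma meas_sin: "sin \<in> borel_measurable (lebesgue_on {0<..<pi})"
  by (rule meas_cont) (intro continuous_intros)

lemma L2w_add:
  assumes "L2w \<phi>" "L2w \<psi>"
  shows "L2w (\<lambda>t. \<phi> t + \<psi> t)"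
proof -
  have m1: "\<phi> \<in> borel_measurable (lebesgue_on {0<..<pi})" and m2: "\<psi> \<in> borel_measurable (lebesgue_on {0<..<pi})"
    and i1: "(\<lambda>t. (\<phi> t)^2 * sin t) integrable_on {0<..<pi}" and i2: "(\<lambda>t. (\<psi> t)^2 * sin t) integrable_on {0<..<pi}"
    using assms unfolding L2w_def by auto
  have m: "(\<lambda>t. \<phi> t + \<psi> t) \<in> borel_measurable (lebesgue_on {0<..<pi})"
    using m1 m2 by (rule borel_measurable_add)
  have mm: "(\<lambda>t. (\<phi> t + \<psi> t)^2 * sin t) \<in> borel_measurable (lebesgue_on {0<..<pi})"
    by (intro borel_measurable_times borel_measurable_power m meas_sin)
  have ii: "(\<lambda>t. 2 * ((\<phi> t)^2 * sin t) + 2 * ((\<psi> t)^2 * sin t)) integrable_on {0<..<pi}"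
    by (intro integrable_add integrable_on_mult_right i1 i2)
  have b: "norm ((\<phi> t + \<psi> t)^2 * sin t) \<le> 2 * ((\<phi> t)^2 * sin t) + 2 * ((\<psi> t)^2 * sin t)"
    if "t \<in> {0<..<pi}" for t
  proof -
    have st: "sin t > 0" using that sin_gt_zero by auto
    have "(\<phi> t + \<psi> t)^2 \<le> 2 * (\<phi> t)^2 + 2 * (\<psi> t)^2"
      using sum_squares_ge_zero[of "\<phi> t - \<psi> t" 0] by (simp add: power2_eq_square algebra_simps)
    then have "(\<phi> t + \<psi> t)^2 * sin t \<le> (2 * (\<phi> t)^2 + 2 * (\<psi> t)^2) * sin t"
      using st by (intro mult_right_mono) auto
    then show ?thesis using st by (simp add: algebra_simps)
  qed
  have "(\<lambda>t. (\<phi> t + \<psi> t)^2 * sin t) integrable_on {0<..<pi}"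
    by (rule measurable_bounded_by_integrable_imp_integrable[OF mm ii b lset])
  then show ?thesis unfolding L2w_def using m by auto
qed

lemma L2w_cmult:
  assumes "L2w \<phi>"
  shows "L2w (\<lambda>t. a * \<phi> t)"
proof -
  have m1: "\<phi> \<in> borel_measurable (lebesgue_on {0<..<pi})"
    and i1: "(\<lambda>t. (\<phi> t)^2 * sin t) integrable_on {0<..<pi}"
    using assms unfolding L2w_def by auto
  have m: "(\<lambda>t. a * \<phi> t) \<in> borel_measurable (lebesgue_on {0<..<pi})"
    by (intro borel_measurable_times borel_measurable_const m1)
  have "(\<lambda>t. a^2 * ((\<phi> t)^2 * sin t)) integrable_on {0<..<pi}"
    using i1 by (rule integrable_on_mult_right)
  moreover have "(\<lambda>t. a^2 * ((\<phi> t)^2 * sin t)) = (\<lambda>t. (a * \<phi> t)^2 * sin t)"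
    by (simp add: fun_eq_iff power_mult_distrib)
  ultimately show ?thesis unfolding L2w_def using m by simp
qed

lemma L2w_zero: "L2w (\<lambda>t. 0)"
  unfolding L2w_def by (simp add: integrable_0)

lemma L2w_diff:
  assumes "L2w \<phi>" "L2w \<psi>"
  shows "L2w (\<lambda>t. \<phi> t - \<psi> t)"
proof -
  have "L2w (\<lambda>t. \<phi> t + (-1) * \<psi> t)" by (intro L2w_add L2w_cmult assms)
  then show ?thesis by simp
qed

lemma L2w_sum:
  assumes "finite A" "\<And>m. m \<in> A \<Longrightarrow> L2w (g m)"
  shows "L2w (\<lambda>t. \<Sum>m\<in>A. g m t)"
  using assms
proof (induction A rule: finite_induct)
  case empty then show ?case by (simp add: L2w_zero)
next
  case (insert x F)
  have "L2w (\<lambda>t. g x t + (\<Sum>m\<in>F. g m t))"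
    by (rule L2w_add) (use insert in \<open>auto simp: L2w_def\<close>)
  then show ?case using insert by simp
qed

lemma L2w_intro:
  assumes "continuous_on {0<..<pi} \<phi>" "(\<lambda>t. (\<phi> t)^2 * sin t) integrable_on {0<..<pi}"
  shows "L2w \<phi>"
  unfolding L2w_def using assms meas_cont by auto

lemma powr_sq_times:
  fixes x n :: real
  assumes "x > 0"
  shows "(x powr n)^2 * x = x powr (2 * n + 1)"
proof -
  have "(x powr n)^2 = x powr (2 * n)" using powr_power[of x n 2] assms by simp
  then show ?thesis using powr_plus1[OF assms, of "2 * n"] by simp
qed

lemma L2w_sinpow:
  fixes n :: real
  assumes n: "n > -1"
  shows "L2w (\<lambda>t. sin t powr n)"
proof (rule L2w_intro)
  show "continuous_on {0<..<pi} (\<lambda>t. sin t powr n)"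
  proof -
    have "isCont (\<lambda>t. sin t powr n) t" if "t \<in> {0<..<pi}" for t
      using sin_gt_zero[of t] that by (auto intro!: continuous_intros)
    then show ?thesis by (intro continuous_at_imp_continuous_on) auto
  qed
  have "(\<lambda>t. 2 powr (2 * n + 1) * (sin (t/2) powr (2 * n + 1) * cos (t/2) powr (2 * n + 1))) integrable_on {0<..<pi}"
    by (intro integrable_on_mult_right sc_integrable) (use n in auto)
  moreover have "2 powr (2 * n + 1) * (sin (t/2) powr (2 * n + 1) * cos (t/2) powr (2 * n + 1)) = (sin t powr n)^2 * sin t"
    if "t \<in> {0<..<pi}" for t
  proof -
    have st: "sin t > 0" using sin_gt_zero[of t] that by auto
    have "(sin t powr n)^2 * sin t = sin t powr (2 * n + 1)" by (rule powr_sq_times[OF st])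
    also have "\<dots> = (2 * sin (t/2) * cos (t/2)) powr (2 * n + 1)" using sin_half[of t] by simp
    also have "\<dots> = 2 powr (2 * n + 1) * (sin (t/2) powr (2 * n + 1) * cos (t/2) powr (2 * n + 1))"
      by (simp add: powr_mult)
    finally show ?thesis by simp
  qed
  ultimately show "(\<lambda>t. (sin t powr n)^2 * sin t) integrable_on {0<..<pi}"
    by (rule integrable_eq)
qed

lemma cos_bounds:
  fixes t :: real
  assumes "0 < t" "t < pi"
  shows "cos t < 1" "-1 < cos t"
  using cos_monotone_0_pi[of 0 t] cos_monotone_0_pi[of t pi] assms by auto

lemma ferrers_cont:
  fixes n \<nu> :: real
  assumes n: "n > -1" and nu: "\<nu> \<ge> 0"
  shows "continuous_on {0<..<pi} (\<lambda>t. ferrersP (-n) \<nu> (cos t))"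
proof -
  have co1: "continuous_on {0<..<pi} (\<lambda>t. ((1 + cos t) / (1 - cos t)) powr (- n / 2))"
  proof (rule continuous_on_powr)
    show "\<forall>x\<in>{0<..<pi}. (1 + cos x) / (1 - cos x) \<noteq> 0"
      using cos_bounds by fastforce
    show "continuous_on {0<..<pi} (\<lambda>t. (1 + cos t) / (1 - cos t))"
      by (intro continuous_intros) (use cos_bounds in fastforce)
  qed (intro continuous_intros)
  have "isCont (\<lambda>t. hyp2F1_reg (\<nu> + 1) (- \<nu>) (1 - - n) ((1 - cos t) / 2)) t" if t: "t \<in> {0<..<pi}" for t
  proof -
    have z: "\<bar>(1 - cos t) / 2\<bar> < 1" using cos_bounds[of t] t by simp
    show ?thesis
      by (rule isCont_o2[OF _ hyp_isCont]) (use nu n z in \<open>auto intro!: continuous_intros\<close>)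
  qed
  then have co2: "continuous_on {0<..<pi} (\<lambda>t. hyp2F1_reg (\<nu> + 1) (- \<nu>) (1 - - n) ((1 - cos t) / 2))"
    by (intro continuous_at_imp_continuous_on) auto
  show ?thesis unfolding ferrersP_def by (rule continuous_on_mult[OF co1 co2])
qed

lemma L2w_ferrers:
  fixes n \<nu> :: real
  assumes n: "-1 < n" "n < 1" and nu: "\<nu> \<ge> 0"
  shows "L2w (\<lambda>t. ferrersP (-n) \<nu> (cos t))"
proof (rule L2w_intro)
  show cont: "continuous_on {0<..<pi} (\<lambda>t. ferrersP (-n) \<nu> (cos t))"
    by (rule ferrers_cont) (use n nu in auto)
  define p where "p = (1 + \<bar>n\<bar> - 2 * n) / 4"
  have p0: "p > 0" using n unfolding p_def by (cases "n \<ge> 0") auto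
  have p1: "p + (1 + n) \<ge> 1" using n unfolding p_def by (cases "n \<ge> 0") (auto simp: field_simps)
  have pq: "1 - 2 * n - 4 * p = - \<bar>n\<bar>" unfolding p_def by (simp add: field_simps)
  have "\<exists>C. \<forall>z. 0 \<le> z \<and> z < 1 \<longrightarrow> \<bar>hyp2F1_reg (\<nu>+1) (-\<nu>) (1+n) z\<bar> \<le> C * (1 - z) powr (-p)"
    by (rule hyp_bound) (use nu p0 p1 n in auto)
  then obtain C where C: "\<forall>z. 0 \<le> z \<and> z < 1 \<longrightarrow> \<bar>hyp2F1_reg (\<nu>+1) (-\<nu>) (1+n) z\<bar> \<le> C * (1 - z) powr (-p)"
    by blast
  have int: "(\<lambda>t. 2 * C^2 * (sin (t/2) powr (2 * n + 1) * cos (t/2) powr (- \<bar>n\<bar>))) integrable_on {0<..<pi}"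
    by (intro integrable_on_mult_right sc_integrable) (use n in auto)
  have meas: "(\<lambda>t. (ferrersP (-n) \<nu> (cos t))^2 * sin t) \<in> borel_measurable (lebesgue_on {0<..<pi})"
    by (rule meas_cont) (intro continuous_on_mult continuous_on_power cont continuous_on_sin continuous_on_id)
  have bnd: "norm ((ferrersP (-n) \<nu> (cos t))^2 * sin t)
      \<le> 2 * C^2 * (sin (t/2) powr (2 * n + 1) * cos (t/2) powr (- \<bar>n\<bar>))" if t: "t \<in> {0<..<pi}" for t
  proof -
    define s where "s = sin (t/2)"
    define c where "c = cos (t/2)"
    define F where "F = hyp2F1_reg (\<nu>+1) (-\<nu>) (1+n) (s^2)"
    have h: "0 < s" "s \<le> 1" "0 < c" "c \<le> 1" "s^2 + c^2 = 1"
      using half_ranges[of t] t unfolding s_def c_def by auto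
    have Pe: "ferrersP (-n) \<nu> (cos t) = (s/c) powr n * F"
      unfolding s_def c_def F_def by (rule ferrers_half) (use t in auto)
    have s1: "s^2 < 1" using h by (smt (verit) zero_less_power)
    have "\<bar>F\<bar> \<le> C * (1 - s^2) powr (-p)" using C s1 unfolding F_def by simp
    moreover have "1 - s^2 = c^2" using h by simp
    moreover have "(c^2) powr (-p) = c powr (-2 * p)"
    proof -
      have sq: "c^2 = c powr 2" using powr_realpow[of c 2] h by simp
      show ?thesis unfolding sq powr_powr by simp
    qed
    ultimately have Fb: "\<bar>F\<bar> \<le> C * c powr (-2 * p)" by simp
    have F2: "F^2 \<le> (C * c powr (-2 * p))^2"
    proof -
      have "\<bar>F\<bar>^2 \<le> (C * c powr (-2 * p))^2" by (rule power_mono[OF Fb]) simp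
      then show ?thesis by simp
    qed
    have st: "sin t = 2 * s * c" unfolding s_def c_def by (rule sin_half)
    have sp: "2 * s * c > 0" using h by simp
    have "norm ((ferrersP (-n) \<nu> (cos t))^2 * sin t) = ((s/c) powr n)^2 * F^2 * (2 * s * c)"
      unfolding Pe st using sp by (simp add: power_mult_distrib)
    also have "\<dots> \<le> ((s/c) powr n)^2 * (C * c powr (-2 * p))^2 * (2 * s * c)"
      using F2 sp by (intro mult_right_mono mult_left_mono) auto
    also have "\<dots> = C^2 * (((s/c) powr n * c powr (-2 * p))^2 * (2 * s * c))"
      by (simp add: power_mult_distrib mult_ac)
    also have "\<dots> = C^2 * (2 * (s powr (2 * n + 1) * c powr (1 - 2 * n - 4 * p)))"
      using key_alg[of s c n p] h by simp
    also have "\<dots> = 2 * C^2 * (sin (t/2) powr (2 * n + 1) * cos (t/2) powr (- \<bar>n\<bar>))"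
      unfolding pq s_def c_def by simp
    finally show ?thesis .
  qed
  show "(\<lambda>t. (ferrersP (-n) \<nu> (cos t))^2 * sin t) integrable_on {0<..<pi}"
    by (rule measurable_bounded_by_integrable_imp_integrable[OF meas int bnd lset])
qed

lemma ftc_zero_ext:
  fixes F F' :: "real \<Rightarrow> real" and L \<theta> :: real
  assumes th: "0 < \<theta>" "\<theta> < pi"
    and lim: "(F \<longlongrightarrow> L) (at_right 0)"
    and der: "\<And>t. 0 < t \<Longrightarrow> t < pi \<Longrightarrow> (F has_real_derivative F' t) (at t)"
  shows "(F' has_integral (F \<theta> - L)) {0..\<theta>}"
proof -
  define G where "G t = (if t = 0 then L else F t)" for t
  have cont: "continuous_on {0..\<theta>} G"
    unfolding continuous_on_eq_continuous_within
  proof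
    fix x assume x: "x \<in> {0..\<theta>}"
    show "continuous (at x within {0..\<theta>}) G"
    proof (cases "x = 0")
      case True
      have ev: "eventually (\<lambda>t. F t = G t) (at_right 0)"
        using eventually_at_right_less[of "0::real"] by eventually_elim (auto simp: G_def)
      have "(G \<longlongrightarrow> L) (at_right 0)" by (rule Lim_transform_eventually[OF lim ev])
      then show ?thesis unfolding continuous_within True at_within_Icc_at_right[OF th(1)]
        by (simp add: G_def)
    next
      case False
      then have xp: "0 < x" "x < pi" using x th by auto
      have "isCont F x" using der[OF xp] DERIV_isCont by blast
      moreover have "eventually (\<lambda>t. G t = F t) (nhds x)"
      proof -
        have "eventually (\<lambda>t. t \<in> {0<..}) (nhds x)"
          by (rule eventually_nhds_in_open) (use xp in auto)
        then show ?thesis by eventually_elim (auto simp: G_def)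
      qed
      ultimately have "isCont G x" using isCont_cong by blast
      then show ?thesis by (rule continuous_at_imp_continuous_at_within)
    qed
  qed
  have derG: "(G has_vector_derivative F' t) (at t)" if t: "t \<in> {0<..<\<theta>}" for t
  proof -
    have "(F has_real_derivative F' t) (at t)" using der t th by auto
    then have "(G has_real_derivative F' t) (at t)"
      by (rule has_field_derivative_transform_within_open[where S="{0<..}"])
         (use t in \<open>auto simp: G_def\<close>)
    then show ?thesis by (simp add: has_real_derivative_iff_has_vector_derivative)
  qed
  have "(F' has_integral (G \<theta> - G 0)) {0..\<theta>}"
    by (rule fundamental_theorem_of_calculus_interior) (use th cont derG in auto)
  then show ?thesis using th by (simp add: G_def)
qed

context
  fixes r :: "real \<Rightarrow> real"
  assumes W: "in_W r"
begin

lemma D1: "(r has_real_derivative deriv r t) (at t)"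
  using W unfolding in_W_def by blast

lemma D2: "(deriv r has_real_derivative deriv (deriv r) t) (at t)"
  using W unfolding in_W_def by blast

lemma C2: "continuous_on UNIV (deriv (deriv r))"
  using W unfolding in_W_def by blast

lemma r_even: "r (- t) = r t"
  using W unfolding in_W_def by blast

lemma r_cont: "continuous_on UNIV r"
  using D1 DERIV_isCont continuous_at_imp_continuous_on by blast

lemma r'_cont: "continuous_on UNIV (deriv r)"
  using D2 DERIV_isCont continuous_at_imp_continuous_on by blast

lemma r'0: "deriv r 0 = 0"
proof -
  have "((\<lambda>x. r (- x)) has_real_derivative deriv r (- 0) * (- 1)) (at 0)"
    by (rule DERIV_chain2[where f=r and g=uminus, OF D1]) (auto intro!: derivative_eq_intros)
  moreover have "(\<lambda>x. r (- x)) = r" using r_even by (simp add: fun_eq_iff)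
  ultimately have "(r has_real_derivative - deriv r 0) (at 0)" by simp
  then have "- deriv r 0 = deriv r 0" using D1 DERIV_unique by blast
  then show ?thesis by simp
qed

lemma lim_r'sin: "((\<lambda>t. deriv r t / sin t) \<longlongrightarrow> deriv (deriv r) 0) (at 0)"
proof -
  have a: "((\<lambda>y. (deriv r y - deriv r 0) / (y - 0)) \<longlongrightarrow> deriv (deriv r) 0) (at 0)"
    using D2[of 0] unfolding has_field_derivative_iff .
  have b: "((\<lambda>y. (sin y - sin 0) / (y - 0)) \<longlongrightarrow> cos 0) (at (0::real))"
    using DERIV_sin[of "0::real"] has_field_derivative_iff by blast
  have "((\<lambda>y. ((deriv r y - deriv r 0) / (y - 0)) / ((sin y - sin 0) / (y - 0))) \<longlongrightarrow> deriv (deriv r) 0 / cos 0) (at 0)"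
    by (rule tendsto_divide[OF a b]) simp
  then have c: "((\<lambda>y. (deriv r y / y) / (sin y / y)) \<longlongrightarrow> deriv (deriv r) 0) (at 0)"
    by (simp add: r'0)
  have ev: "eventually (\<lambda>y. (deriv r y / y) / (sin y / y) = deriv r y / sin y) (at 0)"
  proof -
    have "eventually (\<lambda>y. y \<noteq> 0) (at (0::real))" by (simp add: eventually_at_filter)
    then show ?thesis
    proof eventually_elim
      case (elim y)
      then show ?case by (cases "sin y = 0") (auto simp: field_simps)
    qed
  qed
  show ?thesis by (rule Lim_transform_eventually[OF c ev])
qed

lemma radius1_eq: "radius1 r = (\<lambda>t. r t + deriv r t / sin t * cos t)"
  by (simp add: radius1_def fun_eq_iff)

lemma lim_r1: "(radius1 r \<longlongrightarrow> r 0 + deriv (deriv r) 0) (at 0)"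
proof -
  have a: "(r \<longlongrightarrow> r 0) (at 0)" using D1[of 0] DERIV_isCont isCont_def by blast
  have b: "(cos \<longlongrightarrow> cos 0) (at (0::real))" using isCont_cos isCont_def by blast
  have "((\<lambda>t. r t + deriv r t / sin t * cos t) \<longlongrightarrow> r 0 + deriv (deriv r) 0 * cos 0) (at 0)"
    by (intro tendsto_add tendsto_mult a b lim_r'sin)
  then show ?thesis unfolding radius1_eq by simp
qed

lemma C1_eq: "Lim (at_right 0) (radius1 r) = r 0 + deriv (deriv r) 0"
proof (rule tendsto_Lim)
  show "(radius1 r \<longlongrightarrow> r 0 + deriv (deriv r) 0) (at_right 0)"
    using lim_r1 by (rule tendsto_within_subset) simp
qed simp

lemma r1_deriv:
  assumes t: "0 < t" "t < pi"
  shows "(radius1 r has_real_derivative astig r t * cos t / sin t) (at t)"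
proof -
  have st: "sin t \<noteq> 0" using sin_gt_zero[OF t] by simp
  have d: "((\<lambda>t. r t + deriv r t * cos t / sin t) has_real_derivative
      (deriv r t + ((deriv (deriv r) t * cos t + (- sin t) * deriv r t) * sin t - deriv r t * cos t * cos t) / (sin t * sin t))) (at t)"
    by (intro DERIV_add DERIV_divide DERIV_mult D1 D2 DERIV_cos DERIV_sin st)
  have e: "deriv r t + ((deriv (deriv r) t * cos t + (- sin t) * deriv r t) * sin t - deriv r t * cos t * cos t) / (sin t * sin t)
      = astig r t * cos t / sin t"
    unfolding astig_def radius1_def radius2_def using st by (simp add: field_simps)
  have "radius1 r = (\<lambda>t. r t + deriv r t * cos t / sin t)" by (simp add: radius1_def fun_eq_iff)
  then show ?thesis using d unfolding e by simp
qed

lemma q_deriv: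
  assumes t: "0 < t" "t < pi"
  shows "((\<lambda>t. deriv r t / sin t) has_real_derivative astig r t / sin t) (at t)"
proof -
  have st: "sin t \<noteq> 0" using sin_gt_zero[OF t] by simp
  have d: "((\<lambda>t. deriv r t / sin t) has_real_derivative
      (deriv (deriv r) t * sin t - deriv r t * cos t) / (sin t * sin t)) (at t)"
    by (intro DERIV_divide D2 DERIV_sin st)
  have e: "(deriv (deriv r) t * sin t - deriv r t * cos t) / (sin t * sin t) = astig r t / sin t"
    unfolding astig_def radius1_def radius2_def using st by (simp add: field_simps)
  show ?thesis using d unfolding e .
qed

lemma T_f:
  assumes th: "0 < \<theta>" "\<theta> < pi"
  shows "((\<lambda>t. astig r t * cos t / sin t) has_integral
           (radius1 r \<theta> - (r 0 + deriv (deriv r) 0))) {0..\<theta>}"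
proof (rule ftc_zero_ext[OF th])
  show "(radius1 r \<longlongrightarrow> r 0 + deriv (deriv r) 0) (at_right 0)"
    using lim_r1 by (rule tendsto_within_subset) simp
qed (rule r1_deriv)

lemma U_f:
  assumes th: "0 < \<theta>" "\<theta> < pi"
  shows "((\<lambda>t. astig r t / sin t) has_integral
           (deriv r \<theta> / sin \<theta> - deriv (deriv r) 0)) {0..\<theta>}"
proof (rule ftc_zero_ext[OF th, where F="\<lambda>t. deriv r t / sin t"])
  show "((\<lambda>t. deriv r t / sin t) \<longlongrightarrow> deriv (deriv r) 0) (at_right 0)"
    using lim_r'sin by (rule tendsto_within_subset) simp
qed (rule q_deriv)

lemma astig_cont: "continuous_on {0<..<pi} (astig r)"
proof -
  have a: "continuous_on {0<..<pi} r" using r_cont continuous_on_subset by blast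
  have b: "continuous_on {0<..<pi} (deriv r)" using r'_cont continuous_on_subset by blast
  have c: "continuous_on {0<..<pi} (deriv (deriv r))" using C2 continuous_on_subset by blast
  have "continuous_on {0<..<pi} (\<lambda>t. (deriv (deriv r) t + r t) - (r t + deriv r t * cos t / sin t))"
    by (intro continuous_on_diff continuous_on_add continuous_on_divide continuous_on_mult a b c
          continuous_on_cos continuous_on_sin continuous_on_id) (use sin_gt_zero in fastforce)
  moreover have "astig r = (\<lambda>t. (deriv (deriv r) t + r t) - (r t + deriv r t * cos t / sin t))"
    by (simp add: fun_eq_iff astig_def radius1_def radius2_def)
  ultimately show ?thesis by simp
qed

end

lemma sin_pow_int:
  fixes n \<theta> :: real
  assumes n: "n > -1" and th: "0 \<le> \<theta>" "\<theta> \<le> pi"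
  shows "(\<lambda>t. sin t powr (2 * n + 1)) integrable_on {0..\<theta>}"
proof -
  have "(\<lambda>t. (sin t powr n)^2 * sin t) integrable_on {0<..<pi}"
    using L2w_sinpow[OF n] unfolding L2w_def by blast
  then have "(\<lambda>t. sin t powr (2 * n + 1)) integrable_on {0<..<pi}"
  proof (rule integrable_eq)
    fix t assume "t \<in> {0<..<pi}"
    then have "sin t > 0" using sin_gt_zero by auto
    then show "(sin t powr n)^2 * sin t = sin t powr (2 * n + 1)" by (rule powr_sq_times)
  qed
  then have "(\<lambda>t. sin t powr (2 * n + 1)) integrable_on {0..pi}"
    using integrable_on_Icc_iff_Ioo by blast
  then show ?thesis by (rule integrable_on_subinterval) (use th in auto)
qed

lemma gamma0_T:
  fixes n \<theta> :: real
  assumes n: "n > -1" and th: "0 < \<theta>" "\<theta> < pi"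
  shows "((\<lambda>t. sin t powr n * (sin t powr (n + 1) * cos t)) has_integral
            (sin \<theta> powr (2 * n + 2) / (2 * n + 2))) {0..\<theta>}"
proof -
  define \<Phi> where "\<Phi> t = sin t powr (2 * n + 2) / (2 * n + 2)" for t
  have cont: "continuous_on {0..\<theta>} \<Phi>"
  proof -
    have "continuous_on {0..\<theta>} (\<lambda>t. sin t powr (2 * n + 2))"
    proof (rule continuous_on_powr')
      show "\<forall>x\<in>{0..\<theta>}. 0 \<le> sin x \<and> (sin x = 0 \<longrightarrow> 0 < 2 * n + 2)"
        using n th by (auto intro!: sin_ge_zero)
    qed (auto intro!: continuous_intros)
    then show ?thesis unfolding \<Phi>_def[abs_def] by (intro continuous_on_divide continuous_on_const) (use n in auto)
  qed
  have der: "(\<Phi> has_vector_derivative (sin t powr n * (sin t powr (n + 1) * cos t))) (at t)"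
    if t: "t \<in> {0<..<\<theta>}" for t
  proof -
    have st: "sin t > 0" using sin_gt_zero t th by auto
    have d: "((\<lambda>t. sin t powr (2 * n + 2)) has_real_derivative
              ((2 * n + 2) * sin t powr (2 * n + 2 - 1)) * cos t) (at t)"
      by (rule DERIV_chain2[where f="\<lambda>x. x powr (2 * n + 2)", OF has_real_derivative_powr DERIV_sin]) (use st in simp)
    have d2: "(\<Phi> has_real_derivative ((2 * n + 2) * sin t powr (2 * n + 2 - 1)) * cos t / (2 * n + 2)) (at t)"
      unfolding \<Phi>_def[abs_def] by (rule DERIV_cdivide[OF d])
    have e1: "2 * n + 2 - 1 = n + (n + 1)" by simp
    have e: "((2 * n + 2) * sin t powr (2 * n + 2 - 1)) * cos t / (2 * n + 2)
             = sin t powr n * (sin t powr (n + 1) * cos t)"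
      unfolding e1 powr_add using n by simp
    show ?thesis using d2 unfolding e by (simp add: has_real_derivative_iff_has_vector_derivative)
  qed
  have "((\<lambda>t. sin t powr n * (sin t powr (n + 1) * cos t)) has_integral (\<Phi> \<theta> - \<Phi> 0)) {0..\<theta>}"
    by (rule fundamental_theorem_of_calculus_interior) (use th cont der in auto)
  then show ?thesis by (simp add: \<Phi>_def)
qed

lemma gamma0_U:
  fixes n \<theta> :: real
  assumes n: "n > -1" and th: "0 < \<theta>" "\<theta> < pi"
  shows "((\<lambda>t. sin t powr n * sin t powr (n + 1)) has_integral
            integral {0..\<theta>} (\<lambda>t. sin t powr (2 * n + 1))) {0..\<theta>}"
proof -
  have "((\<lambda>t. sin t powr (2 * n + 1)) has_integral integral {0..\<theta>} (\<lambda>t. sin t powr (2 * n + 1))) {0..\<theta>}"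
    using sin_pow_int[OF n] th by (intro integrable_integral) auto
  then show ?thesis
  proof (rule has_integral_eq[rotated])
    fix t :: real
    have "2 * n + 1 = n + (n + 1)" by simp
    then show "sin t powr (2 * n + 1) = sin t powr n * sin t powr (n + 1)"
      by (simp only: powr_add)
  qed
qed

lemma pw_bound:
  fixes h w s lam :: real
  assumes s: "s > 0" and lam: "lam > 0"
  shows "\<bar>h\<bar> * w \<le> lam / 2 * (h^2 * s) + 1 / (2 * lam) * (w^2 / s)"
proof -
  have e: "lam / 2 * (h^2 * s) + 1 / (2 * lam) * (w^2 / s) - \<bar>h\<bar> * w = (lam * \<bar>h\<bar> * s - w)^2 / (2 * lam * s)"
    using s lam by (simp add: field_simps power2_eq_square)
  have "(lam * \<bar>h\<bar> * s - w)^2 / (2 * lam * s) \<ge> 0" using s lam by simp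
  then show ?thesis using e by linarith
qed

lemma lin_bound:
  fixes h g :: "real \<Rightarrow> real" and n \<theta> lam :: real
  assumes th: "0 \<le> \<theta>" "\<theta> \<le> pi" and lam: "lam > 0"
    and hsq: "(\<lambda>t. (h t)^2 * sin t) integrable_on {0..\<theta>}"
    and hg: "(\<lambda>t. h t * g t) integrable_on {0..\<theta>}"
    and gb: "\<And>t. t \<in> {0..\<theta>} \<Longrightarrow> \<bar>g t\<bar> \<le> sin t powr (n + 1)"
    and si: "(\<lambda>t. sin t powr (2 * n + 1)) integrable_on {0..\<theta>}"
  shows "\<bar>integral {0..\<theta>} (\<lambda>t. h t * g t)\<bar> \<le>
           lam / 2 * integral {0..\<theta>} (\<lambda>t. (h t)^2 * sin t)
           + 1 / (2 * lam) * integral {0..\<theta>} (\<lambda>t. sin t powr (2 * n + 1))"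
proof -
  define B where "B t = lam / 2 * ((h t)^2 * sin t) + 1 / (2 * lam) * sin t powr (2 * n + 1)" for t
  have Bi: "B integrable_on {0..\<theta>}" unfolding B_def[abs_def]
    by (intro integrable_add integrable_on_mult_right hsq si)
  have pb: "norm (h t * g t) \<le> B t" if t: "t \<in> {0..\<theta>}" for t
  proof (cases "sin t = 0")
    case True
    then have "g t = 0" using gb[OF t] by simp
    then show ?thesis using True by (simp add: B_def)
  next
    case False
    have st: "sin t > 0" using False sin_ge_zero[of t] t th by force
    define w where "w = sin t powr (n + 1)"
    have w2: "w^2 / sin t = sin t powr (2 * n + 1)"
    proof -
      have "w^2 = sin t powr (2 * (n + 1))" unfolding w_def using powr_power[of "sin t" "n + 1" 2] st by simp
      also have "\<dots> = sin t powr (2 * n + 1) * sin t"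
        using powr_plus1[OF st, of "2 * n + 1"] by (simp add: algebra_simps)
      finally show ?thesis using st by simp
    qed
    have "norm (h t * g t) \<le> \<bar>h t\<bar> * w"
      using gb[OF t] unfolding w_def by (simp add: abs_mult mult_left_mono)
    also have "\<dots> \<le> lam / 2 * ((h t)^2 * sin t) + 1 / (2 * lam) * (w^2 / sin t)"
      by (rule pw_bound[OF st lam])
    also have "\<dots> = B t" unfolding B_def w2 ..
    finally show ?thesis .
  qed
  have "norm (integral {0..\<theta>} (\<lambda>t. h t * g t)) \<le> integral {0..\<theta>} B"
    by (rule integral_norm_bound_integral[OF hg Bi pb])
  also have "integral {0..\<theta>} B = lam / 2 * integral {0..\<theta>} (\<lambda>t. (h t)^2 * sin t)
           + 1 / (2 * lam) * integral {0..\<theta>} (\<lambda>t. sin t powr (2 * n + 1))"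
  proof -
    have i1: "(\<lambda>t. lam / 2 * ((h t)^2 * sin t)) integrable_on {0..\<theta>}"
      by (rule integrable_on_mult_right[OF hsq])
    have i2: "(\<lambda>t. 1 / (2 * lam) * sin t powr (2 * n + 1)) integrable_on {0..\<theta>}"
      by (rule integrable_on_mult_right[OF si])
    have "integral {0..\<theta>} B = integral {0..\<theta>} (\<lambda>t. lam / 2 * ((h t)^2 * sin t))
        + integral {0..\<theta>} (\<lambda>t. 1 / (2 * lam) * sin t powr (2 * n + 1))"
      unfolding B_def[abs_def] by (rule integral_add[OF i1 i2])
    also have "\<dots> = lam / 2 * integral {0..\<theta>} (\<lambda>t. (h t)^2 * sin t)
           + 1 / (2 * lam) * integral {0..\<theta>} (\<lambda>t. sin t powr (2 * n + 1))"
      by (simp only: integral_mult_right)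
    finally show ?thesis .
  qed
  finally show ?thesis by simp
qed

lemma to_zero:
  fixes D A :: "nat \<Rightarrow> real" and K :: real
  assumes b: "\<And>M lam. lam > 0 \<Longrightarrow> \<bar>D M\<bar> \<le> lam / 2 * A M + K / (2 * lam)"
    and K: "K \<ge> 0" and A: "A \<longlonglongrightarrow> 0"
  shows "D \<longlonglongrightarrow> 0"
proof (rule LIMSEQ_I)
  fix e :: real assume e: "e > 0"
  define lam where "lam = (K + 1) / e"
  have lam: "lam > 0" unfolding lam_def using K e by simp
  have Kl: "K / (2 * lam) < e / 2"
    unfolding lam_def using K e by (simp add: field_simps)
  obtain no where no: "\<And>M. M \<ge> no \<Longrightarrow> norm (A M - 0) < e / lam"
    using LIMSEQ_D[OF A, of "e / lam"] lam e by auto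
  have "norm (D M - 0) < e" if "M \<ge> no" for M
  proof -
    have "A M < e / lam" using no[OF that] by simp
    then have "A M * lam < e" using pos_less_divide_eq[OF lam] by blast
    moreover have "lam / 2 * A M = (A M * lam) / 2" by simp
    ultimately have "lam / 2 * A M < e / 2" by linarith
    then show ?thesis using b[OF lam, of M] Kl by simp
  qed
  then show "\<exists>no. \<forall>M\<ge>no. norm (D M - 0) < e" by blast
qed

definition hM :: "(real \<Rightarrow> real) \<Rightarrow> real \<Rightarrow> (nat \<Rightarrow> real) \<Rightarrow> nat \<Rightarrow> real \<Rightarrow> real" where
  "hM r n \<gamma> M t = astig r t / sin t powr (n + 2) - \<gamma> 0 * sin t powr n
      - (\<Sum>m\<in>{1..M}. \<gamma> m * ferrersP (- n) (n + real m) (cos t))"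

definition TS :: "real \<Rightarrow> (nat \<Rightarrow> real) \<Rightarrow> real \<Rightarrow> nat \<Rightarrow> real" where
  "TS n \<gamma> \<theta> M = \<gamma> 0 * (sin \<theta> powr (2 * n + 2) / (2 * n + 2))
     + (\<Sum>m\<in>{1..M}. \<gamma> m * (sin \<theta> powr (n + 2) * ferrersP (-(n + 2)) (n + real m) (cos \<theta>)
            + cos \<theta> * (sin \<theta> powr (n + 1) * ferrersP (-(n + 1)) (n + real m) (cos \<theta>))))"

definition US :: "real \<Rightarrow> (nat \<Rightarrow> real) \<Rightarrow> real \<Rightarrow> nat \<Rightarrow> real" where
  "US n \<gamma> \<theta> M = \<gamma> 0 * integral {0..\<theta>} (\<lambda>t. sin t powr (2 * n + 1))
     + (\<Sum>m\<in>{1..M}. \<gamma> m * (sin \<theta> powr (n + 1) * ferrersP (-(n + 1)) (n + real m) (cos \<theta>)))"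

context
  fixes r :: "real \<Rightarrow> real" and n :: real and \<gamma> :: "nat \<Rightarrow> real"
  assumes n: "-1 < n" "n < 1"
    and W: "in_W r"
    and L2: "(\<lambda>\<theta>. (astig r \<theta> / sin \<theta> powr (n + 2))\<^sup>2 * sin \<theta>) integrable_on {0..pi}"
    and expansion:
      "(\<lambda>M. integral {0..pi} (\<lambda>\<theta>.
          (astig r \<theta> / sin \<theta> powr (n + 2) - \<gamma> 0 * sin \<theta> powr n
            - (\<Sum>m\<in>{1..M}. \<gamma> m * ferrersP (- n) (n + real m) (cos \<theta>)))\<^sup>2 * sin \<theta>))
       \<longlonglongrightarrow> 0"
begin

lemma L2w_f: "L2w (\<lambda>t. astig r t / sin t powr (n + 2))"
proof (rule L2w_intro)
  have pc: "continuous_on {0<..<pi} (\<lambda>t. sin t powr (n + 2))"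
    by (intro continuous_on_powr continuous_intros) (use sin_gt_zero in fastforce)
  show "continuous_on {0<..<pi} (\<lambda>t. astig r t / sin t powr (n + 2))"
    by (rule continuous_on_divide[OF astig_cont[OF W] pc]) (use sin_gt_zero in fastforce)
  show "(\<lambda>t. (astig r t / sin t powr (n + 2))^2 * sin t) integrable_on {0<..<pi}"
    using L2 integrable_on_Icc_iff_Ioo by blast
qed

lemma L2w_h: "L2w (hM r n \<gamma> M)"
proof -
  have a: "L2w (\<lambda>t. \<gamma> 0 * sin t powr n)" by (intro L2w_cmult L2w_sinpow) (use n in auto)
  have b: "L2w (\<lambda>t. \<Sum>m\<in>{1..M}. \<gamma> m * ferrersP (- n) (n + real m) (cos t))"
    by (intro L2w_sum L2w_cmult L2w_ferrers) (use n in auto)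
  have "L2w (\<lambda>t. (astig r t / sin t powr (n + 2) - \<gamma> 0 * sin t powr n)
      - (\<Sum>m\<in>{1..M}. \<gamma> m * ferrersP (- n) (n + real m) (cos t)))"
    by (intro L2w_diff L2w_f a b)
  then show ?thesis unfolding hM_def[abs_def] by simp
qed

lemma hsq_int: "(\<lambda>t. (hM r n \<gamma> M t)^2 * sin t) integrable_on {0..pi}"
  using L2w_h[of M] unfolding L2w_def using integrable_on_Icc_iff_Ioo by blast

lemma A_lim: "(\<lambda>M. integral {0..pi} (\<lambda>t. (hM r n \<gamma> M t)^2 * sin t)) \<longlonglongrightarrow> 0"
  unfolding hM_def using expansion .

lemma a_le:
  assumes th: "0 < \<theta>" "\<theta> < pi"
  shows "(\<lambda>t. (hM r n \<gamma> M t)^2 * sin t) integrable_on {0..\<theta>}"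
    and "integral {0..\<theta>} (\<lambda>t. (hM r n \<gamma> M t)^2 * sin t) \<le> integral {0..pi} (\<lambda>t. (hM r n \<gamma> M t)^2 * sin t)"
proof -
  show i: "(\<lambda>t. (hM r n \<gamma> M t)^2 * sin t) integrable_on {0..\<theta>}"
    by (rule integrable_on_subinterval[OF hsq_int]) (use th in auto)
  show "integral {0..\<theta>} (\<lambda>t. (hM r n \<gamma> M t)^2 * sin t) \<le> integral {0..pi} (\<lambda>t. (hM r n \<gamma> M t)^2 * sin t)"
    by (rule integral_subset_le[OF _ i hsq_int]) (use th in \<open>auto intro!: mult_nonneg_nonneg sin_ge_zero\<close>)
qed

lemma Tf:
  assumes th: "0 < \<theta>" "\<theta> < pi"
  shows "((\<lambda>t. astig r t / sin t powr (n + 2) * (sin t powr (n + 1) * cos t)) has_integral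
           (radius1 r \<theta> - (r 0 + deriv (deriv r) 0))) {0..\<theta>}"
  using T_f[OF W th]
proof (rule has_integral_eq[rotated])
  fix t assume t: "t \<in> {0..\<theta>}"
  show "astig r t * cos t / sin t = astig r t / sin t powr (n + 2) * (sin t powr (n + 1) * cos t)"
  proof (cases "sin t = 0")
    case True then show ?thesis by simp
  next
    case False
    then have st: "sin t > 0" using sin_ge_zero[of t] t th by force
    have "sin t powr (n + 2) = sin t powr (n + 1) * sin t"
      using powr_plus1[OF st, of "n + 1"] by (simp add: add.assoc)
    moreover have "sin t powr (n + 1) > 0" using st by simp
    ultimately show ?thesis using st by (simp add: field_simps)
  qed
qed

lemma Uf:
  assumes th: "0 < \<theta>" "\<theta> < pi"
  shows "((\<lambda>t. astig r t / sin t powr (n + 2) * sin t powr (n + 1)) has_integral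
           (deriv r \<theta> / sin \<theta> - deriv (deriv r) 0)) {0..\<theta>}"
  using U_f[OF W th]
proof (rule has_integral_eq[rotated])
  fix t assume t: "t \<in> {0..\<theta>}"
  show "astig r t / sin t = astig r t / sin t powr (n + 2) * sin t powr (n + 1)"
  proof (cases "sin t = 0")
    case True then show ?thesis by simp
  next
    case False
    then have st: "sin t > 0" using sin_ge_zero[of t] t th by force
    have "sin t powr (n + 2) = sin t powr (n + 1) * sin t"
      using powr_plus1[OF st, of "n + 1"] by (simp add: add.assoc)
    moreover have "sin t powr (n + 1) > 0" using st by simp
    ultimately show ?thesis using st by (simp add: field_simps)
  qed
qed

lemma TS_int:
  assumes th: "0 < \<theta>" "\<theta> < pi"
  shows "((\<lambda>t. (\<gamma> 0 * sin t powr n + (\<Sum>m\<in>{1..M}. \<gamma> m * ferrersP (- n) (n + real m) (cos t)))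
             * (sin t powr (n + 1) * cos t)) has_integral TS n \<gamma> \<theta> M) {0..\<theta>}"
proof -
  have g0: "((\<lambda>t. \<gamma> 0 * (sin t powr n * (sin t powr (n + 1) * cos t))) has_integral
              \<gamma> 0 * (sin \<theta> powr (2 * n + 2) / (2 * n + 2))) {0..\<theta>}"
    by (rule has_integral_mult_right[OF gamma0_T]) (use n th in auto)
  have gm: "((\<lambda>t. \<Sum>m\<in>{1..M}. \<gamma> m * (ferrersP (- n) (n + real m) (cos t) * (sin t powr (n + 1) * cos t)))
      has_integral (\<Sum>m\<in>{1..M}. \<gamma> m * (sin \<theta> powr (n + 2) * ferrersP (-(n + 2)) (n + real m) (cos \<theta>)
            + cos \<theta> * (sin \<theta> powr (n + 1) * ferrersP (-(n + 1)) (n + real m) (cos \<theta>))))) {0..\<theta>}"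
  proof (rule has_integral_sum)
    fix m assume m: "m \<in> {1..M}"
    show "((\<lambda>t. \<gamma> m * (ferrersP (- n) (n + real m) (cos t) * (sin t powr (n + 1) * cos t))) has_integral
        \<gamma> m * (sin \<theta> powr (n + 2) * ferrersP (-(n + 2)) (n + real m) (cos \<theta>)
            + cos \<theta> * (sin \<theta> powr (n + 1) * ferrersP (-(n + 1)) (n + real m) (cos \<theta>)))) {0..\<theta>}"
      by (rule has_integral_mult_right[OF ftc_I2]) (use n th m in auto)
  qed simp
  have "((\<lambda>t. \<gamma> 0 * (sin t powr n * (sin t powr (n + 1) * cos t))
        + (\<Sum>m\<in>{1..M}. \<gamma> m * (ferrersP (- n) (n + real m) (cos t) * (sin t powr (n + 1) * cos t))))
      has_integral TS n \<gamma> \<theta> M) {0..\<theta>}"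
    unfolding TS_def by (rule has_integral_add[OF g0 gm])
  then show ?thesis
    by (rule has_integral_eq[rotated]) (simp add: distrib_right sum_distrib_right mult.assoc)
qed

lemma US_int:
  assumes th: "0 < \<theta>" "\<theta> < pi"
  shows "((\<lambda>t. (\<gamma> 0 * sin t powr n + (\<Sum>m\<in>{1..M}. \<gamma> m * ferrersP (- n) (n + real m) (cos t)))
             * sin t powr (n + 1)) has_integral US n \<gamma> \<theta> M) {0..\<theta>}"
proof -
  have g0: "((\<lambda>t. \<gamma> 0 * (sin t powr n * sin t powr (n + 1))) has_integral
              \<gamma> 0 * integral {0..\<theta>} (\<lambda>t. sin t powr (2 * n + 1))) {0..\<theta>}"
    by (rule has_integral_mult_right[OF gamma0_U]) (use n th in auto)
  have gm: "((\<lambda>t. \<Sum>m\<in>{1..M}. \<gamma> m * (ferrersP (- n) (n + real m) (cos t) * sin t powr (n + 1)))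
      has_integral (\<Sum>m\<in>{1..M}. \<gamma> m * (sin \<theta> powr (n + 1) * ferrersP (-(n + 1)) (n + real m) (cos \<theta>)))) {0..\<theta>}"
  proof (rule has_integral_sum)
    fix m assume m: "m \<in> {1..M}"
    show "((\<lambda>t. \<gamma> m * (ferrersP (- n) (n + real m) (cos t) * sin t powr (n + 1))) has_integral
        \<gamma> m * (sin \<theta> powr (n + 1) * ferrersP (-(n + 1)) (n + real m) (cos \<theta>))) {0..\<theta>}"
      by (rule has_integral_mult_right[OF ftc_I1]) (use n th m in auto)
  qed simp
  have "((\<lambda>t. \<gamma> 0 * (sin t powr n * sin t powr (n + 1))
        + (\<Sum>m\<in>{1..M}. \<gamma> m * (ferrersP (- n) (n + real m) (cos t) * sin t powr (n + 1))))
      has_integral US n \<gamma> \<theta> M) {0..\<theta>}"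
    unfolding US_def by (rule has_integral_add[OF g0 gm])
  then show ?thesis
    by (rule has_integral_eq[rotated]) (simp add: distrib_right sum_distrib_right mult.assoc)
qed

lemma hT:
  assumes th: "0 < \<theta>" "\<theta> < pi"
  shows "((\<lambda>t. hM r n \<gamma> M t * (sin t powr (n + 1) * cos t)) has_integral
           (radius1 r \<theta> - (r 0 + deriv (deriv r) 0) - TS n \<gamma> \<theta> M)) {0..\<theta>}"
  using has_integral_diff[OF Tf[OF th] TS_int[OF th, of M]]
  by (rule has_integral_eq[rotated]) (simp add: hM_def algebra_simps)

lemma hU:
  assumes th: "0 < \<theta>" "\<theta> < pi"
  shows "((\<lambda>t. hM r n \<gamma> M t * sin t powr (n + 1)) has_integral
           (deriv r \<theta> / sin \<theta> - deriv (deriv r) 0 - US n \<gamma> \<theta> M)) {0..\<theta>}"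
  using has_integral_diff[OF Uf[OF th] US_int[OF th, of M]]
  by (rule has_integral_eq[rotated]) (simp add: hM_def algebra_simps)

lemma I0_nonneg:
  assumes th: "0 < \<theta>" "\<theta> < pi"
  shows "0 \<le> integral {0..\<theta>} (\<lambda>t. sin t powr (2 * n + 1))"
  by (rule has_integral_nonneg[OF integrable_integral[OF sin_pow_int]]) (use n th in auto)

lemma gen_lim:
  fixes g :: "real \<Rightarrow> real" and V :: "nat \<Rightarrow> real" and L \<theta> :: real
  assumes th: "0 < \<theta>" "\<theta> < pi"
    and hi: "\<And>M. ((\<lambda>t. hM r n \<gamma> M t * g t) has_integral (L - V M)) {0..\<theta>}"
    and gb: "\<And>t. t \<in> {0..\<theta>} \<Longrightarrow> \<bar>g t\<bar> \<le> sin t powr (n + 1)"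
  shows "V \<longlonglongrightarrow> L"
proof -
  define I0 where "I0 = integral {0..\<theta>} (\<lambda>t. sin t powr (2 * n + 1))"
  define A where "A M = integral {0..pi} (\<lambda>t. (hM r n \<gamma> M t)^2 * sin t)" for M
  have b: "\<bar>L - V M\<bar> \<le> lam / 2 * A M + I0 / (2 * lam)" if lam: "lam > 0" for M lam
  proof -
    have "\<bar>integral {0..\<theta>} (\<lambda>t. hM r n \<gamma> M t * g t)\<bar> \<le>
           lam / 2 * integral {0..\<theta>} (\<lambda>t. (hM r n \<gamma> M t)^2 * sin t)
           + 1 / (2 * lam) * integral {0..\<theta>} (\<lambda>t. sin t powr (2 * n + 1))"
    proof (rule lin_bound)
      show "(\<lambda>t. hM r n \<gamma> M t * g t) integrable_on {0..\<theta>}" using hi[of M] by blast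
      show "(\<lambda>t. sin t powr (2 * n + 1)) integrable_on {0..\<theta>}" by (rule sin_pow_int) (use n th in auto)
    qed (use th lam a_le(1)[OF th] gb in auto)
    moreover have "integral {0..\<theta>} (\<lambda>t. hM r n \<gamma> M t * g t) = L - V M"
      using hi[of M] by (rule integral_unique)
    moreover have "lam / 2 * integral {0..\<theta>} (\<lambda>t. (hM r n \<gamma> M t)^2 * sin t) \<le> lam / 2 * A M"
      unfolding A_def using a_le(2)[OF th, of M] lam by simp
    ultimately show ?thesis unfolding I0_def by simp
  qed
  have "(\<lambda>M. L - V M) \<longlonglongrightarrow> 0"
    by (rule to_zero[OF b]) (use I0_nonneg[OF th] A_lim in \<open>auto simp: I0_def A_def\<close>)
  then have "(\<lambda>M. L - (L - V M)) \<longlonglongrightarrow> L - 0" by (intro tendsto_diff tendsto_const)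
  then show ?thesis by simp
qed

lemma TS_lim:
  assumes th: "0 < \<theta>" "\<theta> < pi"
  shows "TS n \<gamma> \<theta> \<longlonglongrightarrow> radius1 r \<theta> - (r 0 + deriv (deriv r) 0)"
proof (rule gen_lim[OF th])
  show "((\<lambda>t. hM r n \<gamma> M t * (sin t powr (n + 1) * cos t)) has_integral
           (radius1 r \<theta> - (r 0 + deriv (deriv r) 0) - TS n \<gamma> \<theta> M)) {0..\<theta>}" for M
    by (rule hT[OF th])
  show "\<bar>sin t powr (n + 1) * cos t\<bar> \<le> sin t powr (n + 1)" for t
  proof -
    have "\<bar>sin t powr (n + 1) * cos t\<bar> = sin t powr (n + 1) * \<bar>cos t\<bar>" by (simp add: abs_mult)
    also have "\<dots> \<le> sin t powr (n + 1) * 1" by (intro mult_left_mono) auto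
    finally show ?thesis by simp
  qed
qed

lemma US_lim:
  assumes th: "0 < \<theta>" "\<theta> < pi"
  shows "US n \<gamma> \<theta> \<longlonglongrightarrow> deriv r \<theta> / sin \<theta> - deriv (deriv r) 0"
proof (rule gen_lim[OF th])
  show "((\<lambda>t. hM r n \<gamma> M t * sin t powr (n + 1)) has_integral
           (deriv r \<theta> / sin \<theta> - deriv (deriv r) 0 - US n \<gamma> \<theta> M)) {0..\<theta>}" for M
    by (rule hU[OF th])
qed simp

end

theorem theorem5p8:
  fixes r :: "real \<Rightarrow> real" and n :: real and \<gamma> :: "nat \<Rightarrow> real"
  assumes n: "-1 < n" "n < 1"
    and W: "in_W r"
    and L2: "(\<lambda>\<theta>. (astig r \<theta> / sin \<theta> powr (n + 2))\<^sup>2 * sin \<theta>) integrable_on {0..pi}"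
    and expansion:
      "(\<lambda>M. integral {0..pi} (\<lambda>\<theta>.
          (astig r \<theta> / sin \<theta> powr (n + 2) - \<gamma> 0 * sin \<theta> powr n
            - (\<Sum>m\<in>{1..M}. \<gamma> m * ferrersP (- n) (n + real m) (cos \<theta>)))\<^sup>2 * sin \<theta>))
       \<longlonglongrightarrow> 0"
  shows "\<forall>\<theta>\<in>{0<..<pi}.
     let C1 = Lim (at_right 0) (radius1 r); C2 = r 0 - C1 in
       summable (\<lambda>m. \<gamma> (Suc m) * (ferrersP (- (n + 2)) (n + real (Suc m)) (cos \<theta>)
                  + cos \<theta> / sin \<theta> * ferrersP (- (n + 1)) (n + real (Suc m)) (cos \<theta>))) \<and>
       radius1 r \<theta> = C1 + \<gamma> 0 / (2 * (n + 1)) * sin \<theta> powr (2 * n + 2)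
         + sin \<theta> powr (n + 2) *
           (\<Sum>m. \<gamma> (Suc m) * (ferrersP (- (n + 2)) (n + real (Suc m)) (cos \<theta>)
                  + cos \<theta> / sin \<theta> * ferrersP (- (n + 1)) (n + real (Suc m)) (cos \<theta>))) \<and>
       summable (\<lambda>m. \<gamma> (Suc m) * ferrersP (- (n + 2)) (n + real (Suc m)) (cos \<theta>)) \<and>
       r \<theta> = C2 * cos \<theta> + C1
         + \<gamma> 0 * (sin \<theta> powr (2 * n + 2) / (2 * (n + 1))
                   - cos \<theta> * integral {0..\<theta>} (\<lambda>t. sin t powr (2 * n + 1)))
         + sin \<theta> powr (n + 2) *
           (\<Sum>m. \<gamma> (Suc m) * ferrersP (- (n + 2)) (n + real (Suc m)) (cos \<theta>))"
proof
  fix \<theta> :: real assume "\<theta> \<in> {0<..<pi}"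
  then have th: "0 < \<theta>" "\<theta> < pi" by auto
  have C1e: "Lim (at_right 0) (radius1 r) = r 0 + deriv (deriv r) 0" by (rule C1_eq[OF W])
  define C1 where "C1 = r 0 + deriv (deriv r) 0"
  define s where "s = sin \<theta>"
  have s: "s > 0" unfolding s_def using sin_gt_zero th by auto
  define K1 where "K1 = sin \<theta> powr (n + 1)"
  define K2 where "K2 = sin \<theta> powr (n + 2)"
  have K1: "K1 > 0" unfolding K1_def using s s_def by simp
  have K2e: "K2 = K1 * s" unfolding K1_def K2_def s_def
    using powr_plus1[of "sin \<theta>" "n + 1"] s s_def by (simp add: add.assoc)
  have K2: "K2 > 0" using K1 s K2e by simp
  define X0 where "X0 = sin \<theta> powr (2 * n + 2) / (2 * n + 2)"
  define I0 where "I0 = integral {0..\<theta>} (\<lambda>t. sin t powr (2 * n + 1))"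
  define P1 where "P1 m = ferrersP (- (n + 1)) (n + real m) (cos \<theta>)" for m
  define P2 where "P2 m = ferrersP (- (n + 2)) (n + real m) (cos \<theta>)" for m
  define b where "b m = \<gamma> (Suc m) * (P2 (Suc m) + cos \<theta> / sin \<theta> * P1 (Suc m))" for m
  define c where "c m = \<gamma> (Suc m) * P1 (Suc m)" for m
  define d where "d m = \<gamma> (Suc m) * P2 (Suc m)" for m
  have sh: "(\<Sum>m\<in>{1..M}. g m) = (\<Sum>i<M. g (Suc i))" for g :: "nat \<Rightarrow> real" and M
  proof -
    have "{1..M} = {Suc 0..M}" by simp
    then show ?thesis using sum.atLeast1_atMost_eq[of g M] by simp
  qed
  have pT: "(\<Sum>i<M. b i) = (TS n \<gamma> \<theta> M - \<gamma> 0 * X0) / K2" for M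
  proof -
    have e1: "\<gamma> m * (sin \<theta> powr (n + 2) * P2 m + cos \<theta> * (sin \<theta> powr (n + 1) * P1 m))
        = K2 * (\<gamma> m * (P2 m + cos \<theta> / sin \<theta> * P1 m))" for m
      using K2e s unfolding K1_def K2_def s_def by (simp add: field_simps)
    have "TS n \<gamma> \<theta> M - \<gamma> 0 * X0 = (\<Sum>m\<in>{1..M}. K2 * (\<gamma> m * (P2 m + cos \<theta> / sin \<theta> * P1 m)))"
      unfolding TS_def X0_def P1_def[symmetric] P2_def[symmetric] e1 by simp
    also have "\<dots> = K2 * (\<Sum>i<M. b i)" unfolding sh b_def by (simp add: sum_distrib_left)
    finally show ?thesis using K2 by simp
  qed
  have pU: "(\<Sum>i<M. c i) = (US n \<gamma> \<theta> M - \<gamma> 0 * I0) / K1" for M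
  proof -
    have "US n \<gamma> \<theta> M - \<gamma> 0 * I0 = (\<Sum>m\<in>{1..M}. K1 * (\<gamma> m * P1 m))"
      unfolding US_def I0_def P1_def[symmetric] K1_def by (simp add: mult_ac)
    also have "\<dots> = K1 * (\<Sum>i<M. c i)" unfolding sh c_def by (simp add: sum_distrib_left)
    finally show ?thesis using K1 by simp
  qed
  define L where "L = ((radius1 r \<theta> - C1) - \<gamma> 0 * X0) / K2"
  define L1 where "L1 = ((deriv r \<theta> / sin \<theta> - deriv (deriv r) 0) - \<gamma> 0 * I0) / K1"
  have bs: "b sums L"
  proof -
    have "(\<lambda>M. (TS n \<gamma> \<theta> M - \<gamma> 0 * X0) / K2) \<longlonglongrightarrow> L"
      unfolding L_def C1_def
      by (intro tendsto_divide tendsto_diff tendsto_const TS_lim[OF n W L2 expansion th]) (use K2 in simp)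
    then show ?thesis unfolding sums_def pT .
  qed
  have cs: "c sums L1"
  proof -
    have "(\<lambda>M. (US n \<gamma> \<theta> M - \<gamma> 0 * I0) / K1) \<longlonglongrightarrow> L1"
      unfolding L1_def
      by (intro tendsto_divide tendsto_diff tendsto_const US_lim[OF n W L2 expansion th]) (use K1 in simp)
    then show ?thesis unfolding sums_def pU .
  qed
  have ds: "d sums (L - cos \<theta> / sin \<theta> * L1)"
  proof -
    have "(\<lambda>m. b m - cos \<theta> / sin \<theta> * c m) sums (L - cos \<theta> / sin \<theta> * L1)"
      by (intro sums_diff sums_mult bs cs)
    moreover have "(\<lambda>m. b m - cos \<theta> / sin \<theta> * c m) = d"
      unfolding b_def c_def d_def by (simp add: fun_eq_iff algebra_simps)
    ultimately show ?thesis by simp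
  qed
  have sb: "summable b" and sbv: "suminf b = L" using bs sums_summable sums_unique by metis+
  have sd: "summable d" and sdv: "suminf d = L - cos \<theta> / sin \<theta> * L1"
    using ds sums_summable sums_unique by metis+
  have r1: "radius1 r \<theta> = C1 + \<gamma> 0 / (2 * (n + 1)) * sin \<theta> powr (2 * n + 2) + K2 * suminf b"
  proof -
    have "K2 * suminf b = radius1 r \<theta> - C1 - \<gamma> 0 * X0" unfolding sbv L_def using K2 by simp
    moreover have "\<gamma> 0 / (2 * (n + 1)) * sin \<theta> powr (2 * n + 2) = \<gamma> 0 * X0"
      unfolding X0_def by (simp add: algebra_simps)
    ultimately show ?thesis by simp
  qed
  have rr: "r \<theta> = (r 0 - C1) * cos \<theta> + C1
         + \<gamma> 0 * (sin \<theta> powr (2 * n + 2) / (2 * (n + 1)) - cos \<theta> * I0) + K2 * suminf d"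
  proof -
    have e1: "K2 * suminf d = (radius1 r \<theta> - C1 - \<gamma> 0 * X0)
        - cos \<theta> * (deriv r \<theta> / s - deriv (deriv r) 0 - \<gamma> 0 * I0)"
    proof -
      have "K2 * suminf d = K2 * L - (K2 / K1) * (cos \<theta> / s) * (K1 * L1)"
        unfolding sdv s_def using K1 by (simp add: algebra_simps)
      also have "K2 * L = radius1 r \<theta> - C1 - \<gamma> 0 * X0" unfolding L_def using K2 by simp
      also have "K1 * L1 = deriv r \<theta> / s - deriv (deriv r) 0 - \<gamma> 0 * I0" unfolding L1_def s_def using K1 by simp
      also have "(K2 / K1) * (cos \<theta> / s) = cos \<theta>" unfolding K2e using K1 s by simp
      finally show ?thesis .
    qed
    have e2: "radius1 r \<theta> = r \<theta> + deriv r \<theta> * cos \<theta> / s" unfolding radius1_def s_def ..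
    have e3: "sin \<theta> powr (2 * n + 2) / (2 * (n + 1)) = X0" unfolding X0_def by (simp add: algebra_simps)
    show ?thesis unfolding e3 e1 e2 C1_def by (simp add: algebra_simps)
  qed
  show "let C1 = Lim (at_right 0) (radius1 r); C2 = r 0 - C1 in
       summable (\<lambda>m. \<gamma> (Suc m) * (ferrersP (- (n + 2)) (n + real (Suc m)) (cos \<theta>)
                  + cos \<theta> / sin \<theta> * ferrersP (- (n + 1)) (n + real (Suc m)) (cos \<theta>))) \<and>
       radius1 r \<theta> = C1 + \<gamma> 0 / (2 * (n + 1)) * sin \<theta> powr (2 * n + 2)
         + sin \<theta> powr (n + 2) *
           (\<Sum>m. \<gamma> (Suc m) * (ferrersP (- (n + 2)) (n + real (Suc m)) (cos \<theta>)
                  + cos \<theta> / sin \<theta> * ferrersP (- (n + 1)) (n + real (Suc m)) (cos \<theta>))) \<and>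
       summable (\<lambda>m. \<gamma> (Suc m) * ferrersP (- (n + 2)) (n + real (Suc m)) (cos \<theta>)) \<and>
       r \<theta> = C2 * cos \<theta> + C1
         + \<gamma> 0 * (sin \<theta> powr (2 * n + 2) / (2 * (n + 1))
                   - cos \<theta> * integral {0..\<theta>} (\<lambda>t. sin t powr (2 * n + 1)))
         + sin \<theta> powr (n + 2) *
           (\<Sum>m. \<gamma> (Suc m) * ferrersP (- (n + 2)) (n + real (Suc m)) (cos \<theta>))"
    unfolding Let_def C1e C1_def[symmetric] I0_def[symmetric] K2_def[symmetric]
    using sb r1 sd rr unfolding b_def d_def P1_def P2_def by simp
qed

end
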